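(* If $\beta:\mathbf D\to\mathbf R_{>0}$ satisfies $\sum_{d\in\mathbf D}\beta(d)^p<\infty$ for some $0<p<1/2$, then the action $\theta:\mathbf Z_{fr}\curvearrowright(\mathbf Z^{\mathbf D},m_\beta^{\mathbf D})$, $(g\cdot x)(d)=g(d)+x(d)$, is ergodic.
   Context: $\mathbf D=\{a/2^n:n\ge1,0\le a\le2^n-1\}\subset[0,1)$. For $b>0$, $m_b(\{n\})=e^{-n^2b/2}/Z_b$ with $Z_b=\sum_ke^{-k^2b/2}$; $m_\beta^{\mathbf D}=\bigotimes_dm_{\beta(d)}$ on $\mathbf Z^{\mathbf D}$ with the product $\sigma$-algebra. $\mathbf Z_{fr}$ is the group of maps $g:\mathbf D\to\mathbf Z$ for which there is a standard dyadic partition $0=d_1<\dots<d_{n+1}=1$ (each $(d_j,d_{j+1})$ of the form $(a/2^k,(a+1)/2^k)$) with $g$ constant on each $[d_j,d_{j+1})\cap\mathbf D$. *)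

theory Defs
  imports "HOL-Probability.Probability"
begin

definition Dy :: "real set" where
  "Dy = {real a / 2 ^ n | a n :: nat. n \<ge> 1 \<and> a < 2 ^ n}"

definition Zb :: "real \<Rightarrow> real" where
  "Zb b = (\<Sum>\<^sub>\<infinity>k::int. exp (- (real_of_int k * real_of_int k) * b / 2))"

definition mb :: "real \<Rightarrow> int measure" where
  "mb b = density (count_space UNIV)
            (\<lambda>n. ennreal (exp (- (real_of_int n * real_of_int n) * b / 2) / Zb b))"

definition mbetaD :: "(real \<Rightarrow> real) \<Rightarrow> (real \<Rightarrow> int) measure" where
  "mbetaD \<beta> = PiM Dy (\<lambda>d. mb (\<beta> d))"

definition dyadic_interval :: "real \<Rightarrow> real \<Rightarrow> bool" where
  "dyadic_interval x y \<longleftrightarrow> (\<exists>a k :: nat. x = real a / 2 ^ k \<and> y = (real a + 1) / 2 ^ k)"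

definition std_dyadic_partition :: "real list \<Rightarrow> bool" where
  "std_dyadic_partition ds \<longleftrightarrow> length ds \<ge> 2 \<and> ds ! 0 = 0 \<and> last ds = 1 \<and>
     (\<forall>j. Suc j < length ds \<longrightarrow> ds ! j < ds ! Suc j \<and> dyadic_interval (ds ! j) (ds ! Suc j))"

definition Zfr :: "(real \<Rightarrow> int) set" where
  "Zfr = {g \<in> extensional Dy. \<exists>ds. std_dyadic_partition ds \<and>
      (\<forall>j. Suc j < length ds \<longrightarrow>
         (\<forall>d\<in>Dy. \<forall>d'\<in>Dy. ds ! j \<le> d \<and> d < ds ! Suc j \<and> ds ! j \<le> d' \<and> d' < ds ! Suc j
             \<longrightarrow> g d = g d'))}"

definition act :: "(real \<Rightarrow> int) \<Rightarrow> (real \<Rightarrow> int) \<Rightarrow> (real \<Rightarrow> int)" where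
  "act g x = restrict (\<lambda>d. g d + x d) Dy"

definition ergodic_action :: "(real \<Rightarrow> int) measure \<Rightarrow> bool" where
  "ergodic_action M \<longleftrightarrow> (\<forall>A \<in> sets M.
      (\<forall>g\<in>Zfr. \<forall>x\<in>space M. act g x \<in> A \<longleftrightarrow> x \<in> A) \<longrightarrow>
      emeasure M A = 0 \<or> emeasure M (space M - A) = 0)"

end

theory Submission
  imports Defs
begin

definition gw :: "real \<Rightarrow> int \<Rightarrow> real" where
  "gw b k = exp (- (real_of_int k * real_of_int k) * b / 2)"

lemma gw_pos: "gw b k > 0" by (simp add: gw_def)

lemma gw_summable_nat:
  assumes "b > 0" shows "summable (\<lambda>n::nat. gw b (int n))"
proof (rule summable_comparison_test[of _ "\<lambda>n. exp (- b/2) ^ n"])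
  show "summable (\<lambda>n::nat. exp (- b/2) ^ n)" using assms by (intro summable_geometric) auto
  show "\<exists>N. \<forall>n\<ge>N. norm (gw b (int n)) \<le> exp (- b / 2) ^ n"
  proof (intro exI allI impI)
    fix n :: nat
    have "real n \<le> real n * real n" by (cases n) auto
    hence "- (real n * real n) * b / 2 \<le> - b / 2 * real n" using assms
      by (simp add: mult_right_mono)
    thus "norm (gw b (int n)) \<le> exp (- b / 2) ^ n"
      by (simp add: gw_def exp_of_nat_mult[symmetric] mult.commute)
  qed
qed

lemma gw_summable:
  assumes "b > 0" shows "gw b summable_on UNIV"
proof -
  have s1: "(\<lambda>n::nat. gw b (int n)) summable_on UNIV"
    using gw_summable_nat[OF assms] gw_pos by (subst summable_on_UNIV_nonneg_real_iff) (auto intro: less_imp_le)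
  have s2: "(\<lambda>n::nat. gw b (- int n)) summable_on UNIV"
    using s1 by (simp add: gw_def)
  have "gw b summable_on (range int)"
    using s1 by (subst summable_on_reindex) (auto simp: o_def)
  moreover have "gw b summable_on (range (\<lambda>n. - int n))"
    using s2 by (subst summable_on_reindex) (auto simp: o_def inj_on_def)
  ultimately have "gw b summable_on (range int \<union> range (\<lambda>n. - int n))"
    by (rule summable_on_union)
  moreover have "range int \<union> range (\<lambda>n. - int n) = UNIV"
  proof -
    have "k \<in> range int \<union> range (\<lambda>n. - int n)" for k :: int
    proof (cases "k \<ge> 0")
      case True hence "k = int (nat k)" by simp
      thus ?thesis by blast
    next
      case False hence "k = - int (nat (-k))" by simp
      thus ?thesis by blast
    qed
    thus ?thesis by auto
  qed
  ultimately show ?thesis by simp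
qed

lemma Zb_eq: "Zb b = infsum (gw b) UNIV"
  unfolding Zb_def gw_def by (simp add: mult.assoc)

lemma Zb_ge1: assumes "b > 0" shows "Zb b \<ge> 1"
proof -
  have "sum (gw b) {0} \<le> infsum (gw b) UNIV"
    by (rule finite_sum_le_infsum) (use gw_summable[OF assms] gw_pos in \<open>auto intro: less_imp_le\<close>)
  thus ?thesis by (simp add: Zb_eq gw_def)
qed

lemma Zb_lower:
  assumes "0 < b" "b < 1" shows "1 / sqrt b \<le> 2 * Zb b"
proof -
  define N where "N = nat \<lfloor>1 / sqrt b\<rfloor>"
  have sb: "0 < sqrt b" "sqrt b < 1" using assms by auto
  have N1: "real N \<le> 1 / sqrt b" "1 / sqrt b < real N + 1"
  proof -
    have x: "1 / sqrt b > 0" using sb by simp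
    hence f0: "\<lfloor>1 / sqrt b\<rfloor> \<ge> 0" by (intro zero_le_floor[THEN iffD2]) (rule less_imp_le)
    hence "real N = real_of_int \<lfloor>1 / sqrt b\<rfloor>" unfolding N_def by (rule of_nat_nat)
    thus "real N \<le> 1 / sqrt b" "1 / sqrt b < real N + 1"
      using of_int_floor_le[of "1 / sqrt b"] real_of_int_floor_add_one_gt[of "1 / sqrt b"] by linarith+
  qed
  have "\<forall>k\<in>{-int N..int N}. exp (- 1/2) \<le> gw b k"
  proof
    fix k assume k: "k \<in> {-int N..int N}"
    have "\<bar>real_of_int k\<bar> \<le> real N" using k by auto
    hence "\<bar>real_of_int k\<bar> * \<bar>real_of_int k\<bar> \<le> real N * real N"
      by (intro mult_mono) auto
    hence "real_of_int k * real_of_int k \<le> real N * real N"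
      by (simp only: abs_mult_self_eq)
    also have "\<dots> \<le> (1 / sqrt b) * (1 / sqrt b)" using N1 assms by (intro mult_mono) auto
    also have "(1 / sqrt b) * (1 / sqrt b) = 1 / (sqrt b * sqrt b)" by simp
    also have "sqrt b * sqrt b = b" using assms by simp
    finally have kk: "real_of_int k * real_of_int k \<le> 1 / b" .
    have "real_of_int k * real_of_int k * b \<le> 1 / b * b"
      using kk assms by (intro mult_right_mono) auto
    also have "1 / b * b = 1" using assms by simp
    finally have "real_of_int k * real_of_int k * b \<le> 1" .
    hence "- 1/2 \<le> - (real_of_int k * real_of_int k) * b / 2" by simp
    thus "exp (- 1/2) \<le> gw b k" unfolding gw_def by (subst exp_le_cancel_iff)
  qed
  hence "(\<Sum>k\<in>{-int N..int N}. exp (- 1/2)) \<le> sum (gw b) {-int N..int N}"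
    by (intro sum_mono) auto
  also have "\<dots> \<le> infsum (gw b) UNIV"
    by (rule finite_sum_le_infsum) (use gw_summable[OF assms(1)] gw_pos in \<open>auto intro: less_imp_le\<close>)
  finally have 1: "real (2 * N + 1) * exp (- 1/2) \<le> Zb b"
    by (simp add: Zb_eq add.commute)
  have e: "1/2 \<le> exp (- 1/2::real)" using exp_ge_add_one_self[of "-1/2::real"] by simp
  have "1 \<le> 1 / sqrt b" using sb by simp
  hence "1 / sqrt b \<le> 2 * (real (2 * N + 1) * (1/2))" using N1 by simp
  also have "\<dots> \<le> 2 * (real (2 * N + 1) * exp (- 1/2))" using e by (intro mult_left_mono) auto
  finally show ?thesis using 1 by linarith
qed

lemma inv_Zb_le:
  assumes "0 < b" "0 < p" "p < 1/2"
  shows "1 / Zb b \<le> 2 * b powr p"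
proof (cases "b < 1")
  case True
  have Z: "Zb b > 0" using Zb_ge1[OF assms(1)] by simp
  have "1 / Zb b \<le> 2 * sqrt b"
    using Zb_lower[OF assms(1) True] Z assms(1) by (simp add: field_simps)
  also have "sqrt b = b powr (1/2)" using assms by (simp add: powr_half_sqrt)
  also have "b powr (1/2) \<le> b powr p" using True assms by (intro powr_mono') auto
  finally show ?thesis by simp
next
  case False
  hence "1 \<le> b powr p" using assms by (simp add: ge_one_powr_ge_zero)
  moreover have "1 / Zb b \<le> 1" using Zb_ge1[OF assms(1)] by simp
  ultimately show ?thesis by simp
qed

abbreviation CZ :: "int measure" where "CZ \<equiv> count_space UNIV"

definition pm :: "real \<Rightarrow> int \<Rightarrow> real" where "pm b n = gw b n / Zb b"

lemma nn_integral_count_space_infsum: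
  fixes f :: "'a \<Rightarrow> real"
  assumes "f summable_on A" "\<And>x. x \<in> A \<Longrightarrow> f x \<ge> 0"
  shows "nn_integral (count_space A) (\<lambda>x. ennreal (f x)) = ennreal (infsum f A)"
proof -
  have "(\<lambda>x. norm (f x)) summable_on A"
    using assms by (subst summable_on_cong[where g=f]) auto
  hence "Infinite_Set_Sum.abs_summable_on f A" using abs_summable_equivalent by blast
  thus ?thesis using assms nn_integral_conv_infsetsum infsetsum_infsum by metis
qed

lemma mb_eq: "mb b = density CZ (\<lambda>n. ennreal (pm b n))"
  unfolding mb_def pm_def gw_def by simp

lemma sets_mb[simp, measurable_cong]: "sets (mb b) = sets CZ"
  by (simp add: mb_eq)

lemma space_mb[simp]: "space (mb b) = UNIV"
  by (simp add: mb_eq)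

lemma pm_pos: "b > 0 \<Longrightarrow> pm b n > 0"
  using Zb_ge1[of b] gw_pos[of b n] by (simp add: pm_def)

lemma emeasure_mb: "emeasure (mb b) E = (\<integral>\<^sup>+ n. ennreal (pm b n) * indicator E n \<partial>CZ)"
  by (simp add: mb_eq emeasure_density)

lemma prob_mb: assumes "b > 0" shows "prob_space (mb b)"
proof
  have Z: "Zb b \<noteq> 0" using Zb_ge1[OF assms] by simp
  have s: "pm b summable_on UNIV"
    unfolding pm_def divide_inverse by (intro summable_on_cmult_left gw_summable assms)
  have "emeasure (mb b) (space (mb b)) = (\<integral>\<^sup>+ n. ennreal (pm b n) \<partial>CZ)"
    by (simp add: emeasure_mb)
  also have "\<dots> = ennreal (infsum (pm b) UNIV)"
    by (rule nn_integral_count_space_infsum[OF s]) (use pm_pos[OF assms] in \<open>auto intro: less_imp_le\<close>)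
  also have "infsum (pm b) UNIV = 1"
    unfolding pm_def divide_inverse infsum_cmult_left' using Z by (simp add: Zb_eq)
  finally show "emeasure (mb b) (space (mb b)) = 1" by simp
qed

lemma emeasure_mb_single: "emeasure (mb b) {n} = ennreal (pm b n)"
  by (simp add: emeasure_mb)

lemma emeasure_mb_shift:
  "emeasure (mb b) {n. c + n \<in> S} = (\<integral>\<^sup>+ m. ennreal (pm b (m - c)) * indicator S m \<partial>CZ)"
proof -
  have bij: "bij_betw (\<lambda>m. m - c) UNIV (UNIV::int set)"
    by (rule bij_betwI[where g="\<lambda>n. n + c"]) auto
  have "emeasure (mb b) {n. c + n \<in> S} = (\<integral>\<^sup>+ n. ennreal (pm b n) * indicator {n. c + n \<in> S} n \<partial>CZ)"
    by (simp add: emeasure_mb)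
  also have "\<dots> = (\<integral>\<^sup>+ m. ennreal (pm b (m - c)) * indicator {n. c + n \<in> S} (m - c) \<partial>CZ)"
    using nn_integral_bij_count_space[OF bij, of "\<lambda>n. ennreal (pm b n) * indicator {n. c + n \<in> S} n"]
    by simp
  also have "\<dots> = (\<integral>\<^sup>+ m. ennreal (pm b (m - c)) * indicator S m \<partial>CZ)"
    by (intro nn_integral_cong) (simp add: indicator_def)
  finally show ?thesis .
qed

lemma pm_mono_sq:
  assumes "b > 0" "real_of_int m * real_of_int m \<le> real_of_int n * real_of_int n"
  shows "pm b n \<le> pm b m"
proof -
  have "gw b n \<le> gw b m" unfolding gw_def using assms
    by (simp add: mult_right_mono)
  thus ?thesis unfolding pm_def using Zb_ge1[OF assms(1)] by (simp add: divide_right_mono)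
qed

lemma shift_base:
  assumes b: "b > 0" and c: "c = 1 \<or> c = -1"
  shows "emeasure (mb b) E \<le> emeasure (mb b) {n. c + n \<in> E} + ennreal (pm b 0)"
proof -
  interpret prob_space "mb b" by (rule prob_mb[OF b])
  define Q where "Q S = emeasure (mb b) {n. c + n \<in> S}" for S
  define P where "P S = emeasure (mb b) S" for S
  have Q_int: "Q S = (\<integral>\<^sup>+ m. ennreal (pm b (m - c)) * indicator S m \<partial>CZ)" for S
    unfolding Q_def by (rule emeasure_mb_shift)
  have P_int: "P S = (\<integral>\<^sup>+ m. ennreal (pm b m) * indicator S m \<partial>CZ)" for S
    unfolding P_def by (rule emeasure_mb)
  define H where "H = {m. c * m \<le> 0}"
  have cc: "c * c = 1" using c by auto
  \<comment> \<open>outside H the density decreases\<close>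
  have up: "P S \<le> Q S" if "S \<inter> H = {}" for S
    unfolding P_int Q_int
  proof (intro nn_integral_mono)
    fix m show "ennreal (pm b m) * indicator S m \<le> ennreal (pm b (m - c)) * indicator S m"
    proof (cases "m \<in> S")
      case True
      hence "c * m \<ge> 1" using that unfolding H_def by auto
      moreover have "(m - c) * (m - c) = m * m - 2 * (c * m) + c * c" by (simp add: algebra_simps)
      ultimately have "(m - c) * (m - c) \<le> m * m" using cc by linarith
      hence "real_of_int ((m - c) * (m - c)) \<le> real_of_int (m * m)" by (simp only: of_int_le_iff)
      hence "real_of_int (m - c) * real_of_int (m - c) \<le> real_of_int m * real_of_int m" by simp
      hence "pm b m \<le> pm b (m - c)" by (rule pm_mono_sq[OF b])
      thus ?thesis using True by (simp add: ennreal_leI)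
    qed simp
  qed
  have down: "Q S \<le> P S" if "S \<subseteq> H" for S
    unfolding P_int Q_int
  proof (intro nn_integral_mono)
    fix m show "ennreal (pm b (m - c)) * indicator S m \<le> ennreal (pm b m) * indicator S m"
    proof (cases "m \<in> S")
      case True
      hence "c * m \<le> 0" using that unfolding H_def by auto
      moreover have "(m - c) * (m - c) = m * m - 2 * (c * m) + c * c" by (simp add: algebra_simps)
      ultimately have "m * m \<le> (m - c) * (m - c)" using cc by linarith
      hence "real_of_int (m * m) \<le> real_of_int ((m - c) * (m - c))" by (simp only: of_int_le_iff)
      hence "real_of_int m * real_of_int m \<le> real_of_int (m - c) * real_of_int (m - c)" by simp
      hence "pm b (m - c) \<le> pm b m" by (rule pm_mono_sq[OF b])
      thus ?thesis using True by (simp add: ennreal_leI)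
    qed simp
  qed
  have PH: "P H = Q H + ennreal (pm b 0)"
  proof -
    have "{n. c + n \<in> H} = H - {0}"
      using c
    proof
      assume "c = 1" thus ?thesis unfolding H_def by auto
    next
      assume "c = -1" thus ?thesis unfolding H_def by auto
    qed
    hence "Q H = P (H - {0})" unfolding Q_def P_def by simp
    moreover have "P H = P (H - {0}) + P {0}"
    proof -
      have "P (H - {0}) + P {0} = P ((H - {0}) \<union> {0})" unfolding P_def by (rule plus_emeasure) auto
      moreover have "(H - {0}) \<union> {0} = H" by (auto simp: H_def)
      ultimately show ?thesis by simp
    qed
    moreover have "P {0} = ennreal (pm b 0)" unfolding P_def by (rule emeasure_mb_single)
    ultimately show ?thesis by simp
  qed
  have Qadd: "Q (A \<union> B) = Q A + Q B" if "A \<inter> B = {}" for A B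
  proof -
    have "{n. c + n \<in> A \<union> B} = {n. c + n \<in> A} \<union> {n. c + n \<in> B}" by auto
    moreover have "{n. c + n \<in> A} \<inter> {n. c + n \<in> B} = {}" using that by auto
    ultimately show ?thesis unfolding Q_def
      using plus_emeasure[of "{n. c + n \<in> A}" "mb b" "{n. c + n \<in> B}"] by simp
  qed
  have Padd: "P (A \<union> B) = P A + P B" if "A \<inter> B = {}" for A B
    unfolding P_def using that plus_emeasure[of A "mb b" B] by simp
  define Em where "Em = E \<inter> H"
  define Ep where "Ep = E - H"
  have fin: "Q S \<noteq> \<infinity>" for S unfolding Q_def by simp
  have "P Em + Q (H - Em) \<le> P Em + P (H - Em)"
    using down[of "H - Em"] by (simp add: add_left_mono)
  also have "\<dots> = P H"
  proof -
    have "Em \<union> (H - Em) = H" "Em \<inter> (H - Em) = {}" unfolding Em_def by auto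
    thus ?thesis using Padd[of Em "H - Em"] by simp
  qed
  also have "\<dots> = Q Em + Q (H - Em) + ennreal (pm b 0)"
  proof -
    have "Em \<union> (H - Em) = H" "Em \<inter> (H - Em) = {}" unfolding Em_def by auto
    thus ?thesis using PH Qadd[of Em "H - Em"] by simp
  qed
  finally have "Q (H - Em) + P Em \<le> Q (H - Em) + (Q Em + ennreal (pm b 0))"
    by (simp add: ac_simps)
  hence m: "P Em \<le> Q Em + ennreal (pm b 0)"
    using fin by (simp add: ennreal_add_left_cancel_le)
  have p: "P Ep \<le> Q Ep" by (rule up) (auto simp: Ep_def)
  have EE: "Ep \<union> Em = E" "Ep \<inter> Em = {}" unfolding Ep_def Em_def by auto
  have "P E = P Ep + P Em"
    using Padd[of Ep Em] EE by simp
  also have "\<dots> \<le> Q Ep + (Q Em + ennreal (pm b 0))" by (rule add_mono[OF p m])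
  also have "\<dots> = Q E + ennreal (pm b 0)"
    using Qadd[of Ep Em] EE by (simp add: ac_simps)
  finally show ?thesis unfolding P_def Q_def .
qed

lemma shift_nat:
  assumes b: "b > 0"
  shows "emeasure (mb b) E \<le> emeasure (mb b) {n. int k + n \<in> E} + ennreal (real k * pm b 0)"
    "emeasure (mb b) E \<le> emeasure (mb b) {n. - int k + n \<in> E} + ennreal (real k * pm b 0)"
proof (induction k arbitrary: E)
  case 0
  { case 1 show ?case by simp }
  { case 2 show ?case by simp }
next
  case (Suc k)
  have p0: "pm b 0 \<ge> 0" using pm_pos[OF b] by (simp add: less_imp_le)
  have e: "ennreal (pm b 0) + ennreal (real k * pm b 0) = ennreal (real (Suc k) * pm b 0)"
    using p0 by (simp add: ennreal_plus[symmetric] algebra_simps del: ennreal_plus)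
  { case 1
    have 1: "emeasure (mb b) E \<le> emeasure (mb b) {n. 1 + n \<in> E} + ennreal (pm b 0)"
      by (rule shift_base[OF b]) simp
    have 2: "emeasure (mb b) {n. 1 + n \<in> E} \<le> emeasure (mb b) {n. int k + n \<in> {n. 1 + n \<in> E}} + ennreal (real k * pm b 0)"
      by (rule Suc.IH(1))
    have 3: "{n. int k + n \<in> {n. 1 + n \<in> E}} = {n. int (Suc k) + n \<in> E}" by (auto simp: ac_simps)
    have "emeasure (mb b) E \<le> emeasure (mb b) {n. int (Suc k) + n \<in> E} + ennreal (real k * pm b 0) + ennreal (pm b 0)"
      using order_trans[OF 1 add_right_mono[OF 2]] unfolding 3 .
    also have "\<dots> = emeasure (mb b) {n. int (Suc k) + n \<in> E} + (ennreal (pm b 0) + ennreal (real k * pm b 0))"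
      by (simp add: ac_simps)
    finally show ?case using e by simp
  }
  { case 2
    have 1: "emeasure (mb b) E \<le> emeasure (mb b) {n. -1 + n \<in> E} + ennreal (pm b 0)"
      by (rule shift_base[OF b]) simp
    have 2: "emeasure (mb b) {n. -1 + n \<in> E} \<le> emeasure (mb b) {n. - int k + n \<in> {n. -1 + n \<in> E}} + ennreal (real k * pm b 0)"
      by (rule Suc.IH(2))
    have 3: "{n. - int k + n \<in> {n. -1 + n \<in> E}} = {n. - int (Suc k) + n \<in> E}" by (auto simp: algebra_simps)
    have "emeasure (mb b) E \<le> emeasure (mb b) {n. - int (Suc k) + n \<in> E} + ennreal (real k * pm b 0) + ennreal (pm b 0)"
      using order_trans[OF 1 add_right_mono[OF 2]] unfolding 3 .
    also have "\<dots> = emeasure (mb b) {n. - int (Suc k) + n \<in> E} + (ennreal (pm b 0) + ennreal (real k * pm b 0))"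
      by (simp add: ac_simps)
    finally show ?case using e by simp
  }
qed

lemma shift_int:
  assumes b: "b > 0"
  shows "emeasure (mb b) E \<le> emeasure (mb b) {n. c + n \<in> E} + ennreal (real_of_int \<bar>c\<bar> * pm b 0)"
proof (cases "c \<ge> 0")
  case True
  then obtain k where "c = int k" using nonneg_int_cases by blast
  thus ?thesis using shift_nat(1)[OF b, of E k] by simp
next
  case False
  hence "c = - int (nat (- c))" by simp
  then obtain k where "c = - int k" by blast
  thus ?thesis using shift_nat(2)[OF b, of E k] by simp
qed

lemma measurable_from_mb[measurable]: "f \<in> measurable (mb b) (count_space UNIV)"
  by (simp add: measurable_cong_sets[OF sets_mb refl])

lemma emeasure_distr_mb: "emeasure (distr (mb b) CZ (\<lambda>n. c + n)) E = emeasure (mb b) {n. c + n \<in> E}"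
  by (subst emeasure_distr) (auto simp: vimage_def)

lemma shift_le1:
  assumes b: "b > 0"
  shows "emeasure (mb b) E \<le> emeasure (distr (mb b) CZ (\<lambda>n. c + n)) E + ennreal (real_of_int \<bar>c\<bar> * pm b 0)"
  unfolding emeasure_distr_mb by (rule shift_int[OF b])

lemma shift_le2:
  assumes b: "b > 0"
  shows "emeasure (distr (mb b) CZ (\<lambda>n. c + n)) E \<le> emeasure (mb b) E + ennreal (real_of_int \<bar>c\<bar> * pm b 0)"
proof -
  have "emeasure (mb b) {n. c + n \<in> E} \<le> emeasure (mb b) {n. - c + n \<in> {n. c + n \<in> E}} + ennreal (real_of_int \<bar>-c\<bar> * pm b 0)"
    by (rule shift_int[OF b])
  also have "{n. - c + n \<in> {n. c + n \<in> E}} = E" by auto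
  finally show ?thesis unfolding emeasure_distr_mb by simp
qed

abbreviation SP :: "'i set \<Rightarrow> ('i \<Rightarrow> int) set" where "SP I \<equiv> PiE I (\<lambda>_. UNIV)"
abbreviation PZ :: "'i set \<Rightarrow> ('i \<Rightarrow> int) measure" where "PZ I \<equiv> PiM I (\<lambda>_. CZ)"

definition good :: "'i set \<Rightarrow> ('i \<Rightarrow> int measure) \<Rightarrow> bool" where
  "good I M \<longleftrightarrow> (\<forall>i. sets (M i) = sets CZ) \<and> (\<forall>i\<in>I. prob_space (M i))"

definition cyl :: "'i set \<Rightarrow> 'i set \<Rightarrow> ('i \<Rightarrow> int) \<Rightarrow> ('i \<Rightarrow> int) set" where
  "cyl I J w = {x \<in> SP I. \<forall>j\<in>J. x j = w j}"

definition fdim :: "'i set \<Rightarrow> 'i set \<Rightarrow> ('i \<Rightarrow> int) set \<Rightarrow> bool" where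
  "fdim I J E \<longleftrightarrow> finite J \<and> J \<subseteq> I \<and> E \<subseteq> SP I \<and>
     (\<forall>x\<in>SP I. \<forall>y\<in>SP I. (\<forall>j\<in>J. x j = y j) \<longrightarrow> (x \<in> E \<longleftrightarrow> y \<in> E))"

lemma good_space: "good I M \<Longrightarrow> space (M i) = UNIV"
  unfolding good_def using sets_eq_imp_space_eq[of "M i" CZ] by auto

lemma good_sets_PiM: "good I M \<Longrightarrow> sets (PiM I M) = sets (PZ I)"
  unfolding good_def by (intro sets_PiM_cong) auto

lemma good_space_PiM: "good I M \<Longrightarrow> space (PiM I M) = SP I"
  by (simp add: space_PiM good_space)

lemma space_PZ: "space (PZ I) = SP I"
  by (simp add: space_PiM)

lemma good_prob_PiM: "good I M \<Longrightarrow> prob_space (PiM I M)"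
  unfolding good_def by (intro prob_space_PiM) auto

lemma cyl_sets:
  assumes "finite J" "J \<subseteq> I" shows "cyl I J w \<in> sets (PZ I)"
proof -
  have "cyl I J w = prod_emb I (\<lambda>_. CZ) J (PiE J (\<lambda>j. {w j}))"
    unfolding cyl_def prod_emb_def by (auto simp: PiE_iff extensional_def)
  also have "\<dots> \<in> sets (PZ I)" using assms by (intro sets_PiM_I) auto
  finally show ?thesis .
qed

lemma cyl_restrict: "cyl I J (restrict x J) = cyl I J x"
  unfolding cyl_def by auto

lemma fdim_union_cyl:
  assumes "fdim I J E"
  shows "E = (\<Union>w\<in>(\<lambda>x. restrict x J) ` E. cyl I J w)"
proof
  show "E \<subseteq> (\<Union>w\<in>(\<lambda>x. restrict x J) ` E. cyl I J w)"
  proof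
    fix x assume xE: "x \<in> E"
    have xS: "x \<in> SP I" using assms xE unfolding fdim_def by blast
    have "x \<in> cyl I J (restrict x J)" using xS unfolding cyl_def by simp
    thus "x \<in> (\<Union>w\<in>(\<lambda>x. restrict x J) ` E. cyl I J w)" using xE by blast
  qed
  show "(\<Union>w\<in>(\<lambda>x. restrict x J) ` E. cyl I J w) \<subseteq> E"
  proof safe
    fix x y assume y: "y \<in> E" and x: "x \<in> cyl I J (restrict y J)"
    have yS: "y \<in> SP I" using assms y unfolding fdim_def by blast
    have xS: "x \<in> SP I" and xy: "\<forall>j\<in>J. x j = y j" using x unfolding cyl_def by auto
    have inv: "\<forall>x\<in>SP I. \<forall>y\<in>SP I. (\<forall>j\<in>J. x j = y j) \<longrightarrow> (x \<in> E \<longleftrightarrow> y \<in> E)"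
      using assms unfolding fdim_def by blast
    show "x \<in> E" using inv xS yS xy y by blast
  qed
qed

lemma countable_restrict_img:
  assumes "finite J" shows "countable ((\<lambda>x. restrict x J) ` (E :: ('i \<Rightarrow> int) set))"
proof (rule countable_subset)
  show "(\<lambda>x. restrict x J) ` E \<subseteq> PiE J (\<lambda>_. UNIV :: int set)" by auto
  show "countable (PiE J (\<lambda>_. UNIV :: int set))" using assms by (intro countable_PiE) auto
qed

lemma fdim_sets:
  assumes "fdim I J E" shows "E \<in> sets (PZ I)"
proof -
  have J: "finite J" "J \<subseteq> I" using assms by (auto simp: fdim_def)
  have "(\<Union>w\<in>(\<lambda>x. restrict x J) ` E. cyl I J w) \<in> sets (PZ I)"
    by (intro sets.countable_UN' countable_restrict_img J) (auto intro!: cyl_sets J)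
  thus ?thesis using fdim_union_cyl[OF assms] by simp
qed

lemma cyl_disjoint:
  "disjoint_family_on (cyl I J) ((\<lambda>x. restrict x J) ` E)"
  unfolding disjoint_family_on_def
proof safe
  fix x y z
  assume ne: "restrict x J \<noteq> restrict y J" and z1: "z \<in> cyl I J (restrict x J)" and z2: "z \<in> cyl I J (restrict y J)"
  from ne obtain j where "j \<in> J" "x j \<noteq> y j" unfolding restrict_def fun_eq_iff by (metis (full_types))
  with z1 z2 show "z \<in> {}" unfolding cyl_def by auto
qed

lemma sum_cyl:
  assumes "fdim I J E" and N: "sets N = sets (PZ I)"
  shows "emeasure N E = (\<integral>\<^sup>+ w. emeasure N (cyl I J w) \<partial>count_space ((\<lambda>x. restrict x J) ` E))"
proof -
  have J: "finite J" "J \<subseteq> I" using assms by (auto simp: fdim_def)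
  have "emeasure N E = emeasure N (\<Union>w\<in>(\<lambda>x. restrict x J) ` E. cyl I J w)"
    using fdim_union_cyl[OF assms(1)] by simp
  also have "\<dots> = (\<integral>\<^sup>+ w. emeasure N (cyl I J w) \<partial>count_space ((\<lambda>x. restrict x J) ` E))"
    by (rule emeasure_UN_countable) (auto simp: N cyl_sets J countable_restrict_img cyl_disjoint)
  finally show ?thesis .
qed

lemma emeasure_cyl:
  assumes "good I M" "finite J" "J \<subseteq> I"
  shows "emeasure (PiM I M) (cyl I J w) = (\<Prod>j\<in>J. emeasure (M j) {w j})"
proof -
  have "cyl I J w = prod_emb I M J (PiE J (\<lambda>j. {w j}))"
    unfolding cyl_def prod_emb_def using good_space[OF assms(1)] by (auto simp: PiE_iff extensional_def)
  moreover have "emeasure (PiM I M) (prod_emb I M J (PiE J (\<lambda>j. {w j}))) = (\<Prod>j\<in>J. emeasure (M j) {w j})"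
    using assms by (intro emeasure_PiM_emb) (auto simp: good_def)
  ultimately show ?thesis by simp
qed

lemma PiM_dep:
  assumes "good I M" "good I M'" "fdim I J E" "\<And>j. j \<in> J \<Longrightarrow> M j = M' j"
  shows "emeasure (PiM I M) E = emeasure (PiM I M') E"
proof -
  have J: "finite J" "J \<subseteq> I" using assms by (auto simp: fdim_def)
  show ?thesis
    using assms(4)
    by (simp add: sum_cyl[OF assms(3) good_sets_PiM[OF assms(1)]] sum_cyl[OF assms(3) good_sets_PiM[OF assms(2)]]
        emeasure_cyl[OF assms(1) J] emeasure_cyl[OF assms(2) J])
qed

lemma good_prob: "good I M \<Longrightarrow> i \<in> I \<Longrightarrow> prob_space (M i)"
  by (simp add: good_def)

lemma TV1:
  assumes gM: "good I M" and gN: "good I N" and i: "i \<in> I"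
    and eq: "\<And>j. j \<in> I \<Longrightarrow> j \<noteq> i \<Longrightarrow> M j = N j"
    and bd: "\<And>E. emeasure (M i) E \<le> emeasure (N i) E + \<delta>"
    and E: "E \<in> sets (PZ I)"
  shows "emeasure (PiM I M) E \<le> emeasure (PiM I N) E + \<delta>"
proof -
  define I' where "I' = I - {i}"
  have II: "insert i I' = I" using i by (auto simp: I'_def)
  define R where "R = PiM I' M"
  have RN: "PiM I' N = R" unfolding R_def by (rule PiM_cong) (auto simp: I'_def eq)
  interpret Mi: prob_space "M i" using gM i by (rule good_prob)
  interpret Ni: prob_space "N i" using gN i by (rule good_prob)
  interpret R: prob_space R unfolding R_def using gM by (intro prob_space_PiM) (auto simp: good_def I'_def)
  interpret MR: pair_sigma_finite "M i" R ..
  interpret NR: pair_sigma_finite "N i" R ..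
  have dM: "distr (M i \<Otimes>\<^sub>M R) (PiM I M) (\<lambda>(x, X). X(i := x)) = PiM I M"
    using distr_pair_PiM_eq_PiM[of I' M i] gM i unfolding II R_def by (auto simp: good_def I'_def)
  have dN: "distr (N i \<Otimes>\<^sub>M R) (PiM I N) (\<lambda>(x, X). X(i := x)) = PiM I N"
    using distr_pair_PiM_eq_PiM[of I' N i] gN i unfolding II RN[symmetric] by (auto simp: good_def I'_def)
  have fe: "(\<lambda>(x, X). X(i := x)) = (\<lambda>p. (snd p)(i := fst p))" by (auto simp: fun_eq_iff)
  have mM: "(\<lambda>(x, X). X(i := x)) \<in> measurable (M i \<Otimes>\<^sub>M R) (PiM I M)"
    unfolding fe by (rule measurable_fun_upd[where J=I']) (auto simp: II[symmetric] R_def)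
  have mN: "(\<lambda>(x, X). X(i := x)) \<in> measurable (N i \<Otimes>\<^sub>M R) (PiM I N)"
    unfolding fe by (rule measurable_fun_upd[where J=I']) (auto simp: II[symmetric] RN[symmetric])
  define G where "G = (\<lambda>(x, X). X(i := x)) -` E \<inter> space (M i \<Otimes>\<^sub>M R)"
  have EM: "E \<in> sets (PiM I M)" using E good_sets_PiM[OF gM] by simp
  have EN: "E \<in> sets (PiM I N)" using E good_sets_PiM[OF gN] by simp
  have spc: "space (N i \<Otimes>\<^sub>M R) = space (M i \<Otimes>\<^sub>M R)"
    by (simp add: space_pair_measure good_space[OF gM] good_space[OF gN])
  have GM: "G \<in> sets (M i \<Otimes>\<^sub>M R)" unfolding G_def using mM EM by (rule measurable_sets)
  have GN: "G \<in> sets (N i \<Otimes>\<^sub>M R)" unfolding G_def spc[symmetric] using mN EN by (rule measurable_sets)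
  have "emeasure (PiM I M) E = emeasure (M i \<Otimes>\<^sub>M R) G"
    unfolding G_def by (subst dM[symmetric]) (simp add: emeasure_distr[OF mM EM])
  also have "\<dots> = (\<integral>\<^sup>+y. emeasure (M i) ((\<lambda>x. (x, y)) -` G) \<partial>R)"
    by (rule MR.emeasure_pair_measure_alt2[OF GM])
  also have "\<dots> \<le> (\<integral>\<^sup>+y. emeasure (N i) ((\<lambda>x. (x, y)) -` G) + \<delta> \<partial>R)"
    by (intro nn_integral_mono bd)
  also have "\<dots> = (\<integral>\<^sup>+y. emeasure (N i) ((\<lambda>x. (x, y)) -` G) \<partial>R) + \<delta>"
    by (subst nn_integral_add) (auto simp: R.emeasure_space_1 intro!: NR.measurable_emeasure_Pair2 GN)
  also have "(\<integral>\<^sup>+y. emeasure (N i) ((\<lambda>x. (x, y)) -` G) \<partial>R) = emeasure (N i \<Otimes>\<^sub>M R) G"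
    by (rule NR.emeasure_pair_measure_alt2[OF GN, symmetric])
  also have "\<dots> = emeasure (PiM I N) E"
    unfolding G_def spc[symmetric] by (subst dN[symmetric]) (simp add: emeasure_distr[OF mN EN])
  finally show ?thesis .
qed

lemma TVfin:
  assumes "finite S"
  shows "good I M \<Longrightarrow> good I N \<Longrightarrow> S \<subseteq> I \<Longrightarrow> (\<forall>j\<in>I - S. M j = N j) \<Longrightarrow>
    (\<forall>i\<in>S. \<forall>E. emeasure (M i) E \<le> emeasure (N i) E + ennreal (\<delta> i)) \<Longrightarrow> (\<forall>i\<in>S. \<delta> i \<ge> 0) \<Longrightarrow>
    E \<in> sets (PZ I) \<Longrightarrow> emeasure (PiM I M) E \<le> emeasure (PiM I N) E + ennreal (sum \<delta> S)"
  using assms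
proof (induction S arbitrary: M rule: finite_induct)
  case empty
  have "PiM I M = PiM I N" using empty by (intro PiM_cong) auto
  thus ?case by simp
next
  case (insert s S)
  define M' where "M' = (\<lambda>j. if j = s then N s else M j)"
  have gM': "good I M'" using insert.prems(1,2) unfolding good_def M'_def by auto
  have 1: "emeasure (PiM I M) E \<le> emeasure (PiM I M') E + ennreal (\<delta> s)"
    by (rule TV1[OF insert.prems(1) gM', of s]) (use insert.prems in \<open>auto simp: M'_def\<close>)
  have 2: "emeasure (PiM I M') E \<le> emeasure (PiM I N) E + ennreal (sum \<delta> S)"
    by (rule insert.IH[OF gM' insert.prems(2)]) (use insert.prems insert.hyps in \<open>auto simp: M'_def\<close>)
  have "emeasure (PiM I M) E \<le> emeasure (PiM I N) E + ennreal (sum \<delta> S) + ennreal (\<delta> s)"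
    using order_trans[OF 1 add_right_mono[OF 2]] .
  also have "\<dots> = emeasure (PiM I N) E + ennreal (sum \<delta> (insert s S))"
    using insert.prems insert.hyps by (simp add: ennreal_plus[symmetric] sum_nonneg add.assoc add.commute del: ennreal_plus)
  finally show ?case .
qed

definition sd :: "'a set \<Rightarrow> 'a set \<Rightarrow> 'a set" where "sd A B = (A - B) \<union> (B - A)"

lemma fdim_prod_emb:
  assumes "finite J" "J \<subseteq> I"
  shows "fdim I J (prod_emb I (\<lambda>_. CZ) J (PiE J X))"
  unfolding fdim_def
proof (intro conjI ballI impI assms)
  show "prod_emb I (\<lambda>_. CZ) J (PiE J X) \<subseteq> SP I" by (auto simp: prod_emb_def)
  fix x y assume x: "x \<in> SP I" and y: "y \<in> SP I" and xy: "\<forall>j\<in>J. x j = y j"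
  have "restrict x J = restrict y J" using xy by auto
  thus "(x \<in> prod_emb I (\<lambda>_. CZ) J (PiE J X)) = (y \<in> prod_emb I (\<lambda>_. CZ) J (PiE J X))"
    using x y by (simp add: prod_emb_def)
qed

lemma tail_small:
  fixes A :: "nat \<Rightarrow> 'a set"
  assumes "finite_measure N" "range A \<subseteq> sets N" "e > 0"
  shows "\<exists>m0. \<forall>m\<ge>m0. measure N (\<Union>n. A n) - measure N (\<Union>n\<in>{..<m}. A n) < e"
proof -
  interpret finite_measure N by fact
  define B where "B m = (\<Union>n\<in>{..<m}. A n)" for m
  have inc: "incseq B" unfolding B_def incseq_def by (auto intro: less_le_trans)
  have rB: "range B \<subseteq> sets N" using assms(2) unfolding B_def by auto
  have UB: "(\<Union>m. B m) = (\<Union>n. A n)" unfolding B_def by auto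
  have "(\<lambda>m. measure N (B m)) \<longlonglongrightarrow> measure N (\<Union>n. A n)"
    using finite_Lim_measure_incseq[OF rB inc] UB by simp
  hence "eventually (\<lambda>m. dist (measure N (B m)) (measure N (\<Union>n. A n)) < e) sequentially"
    using assms(3) by (rule tendstoD)
  then obtain m0 where "\<forall>m\<ge>m0. dist (measure N (B m)) (measure N (\<Union>n. A n)) < e"
    by (auto simp: eventually_sequentially)
  thus ?thesis unfolding B_def dist_real_def by (intro exI[of _ m0]) force
qed

definition approxP :: "'i set \<Rightarrow> ('i \<Rightarrow> int) measure \<Rightarrow> ('i \<Rightarrow> int) measure \<Rightarrow> ('i \<Rightarrow> int) set \<Rightarrow> bool" where
  "approxP I N1 N2 E \<longleftrightarrow> (\<forall>e>0. \<exists>J E'. fdim I J E' \<and> measure N1 (sd E E') < e \<and> measure N2 (sd E E') < e)"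

lemma approx:
  assumes N1: "finite_measure N1" "sets N1 = sets (PZ I)"
    and N2: "finite_measure N2" "sets N2 = sets (PZ I)"
    and E: "E \<in> sets (PZ I)"
  shows "approxP I N1 N2 E"
proof -
  interpret N1: finite_measure N1 by fact
  interpret N2: finite_measure N2 by fact
  have E': "E \<in> sigma_sets (SP I) (prod_algebra I (\<lambda>_. CZ))"
    using E by (simp add: sets_PiM)
  have PA: "prod_algebra I (\<lambda>_. CZ) \<subseteq> Pow (SP I)"
    using prod_algebra_sets_into_space[of I "\<lambda>_. CZ"] by simp
  from E' show ?thesis
  proof (induction rule: sigma_sets.induct)
    case (Basic a)
    then obtain J X where a: "a = prod_emb I (\<lambda>_. CZ) J (PiE J X)" "finite J" "J \<subseteq> I"
      by (auto elim!: prod_algebraE)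
    show ?case unfolding approxP_def
      by (intro allI impI exI[of _ J] exI[of _ a]) (auto simp: sd_def a fdim_prod_emb)
  next
    case Empty
    have "fdim I {} {}" by (simp add: fdim_def)
    thus ?case unfolding approxP_def by (intro allI impI exI[of _ "{}"] exI[of _ "{}"]) (auto simp: sd_def)
  next
    case (Compl a)
    have aS: "a \<subseteq> SP I" using sigma_sets_into_sp[OF PA Compl.hyps] .
    show ?case unfolding approxP_def
    proof (intro allI impI)
      fix e :: real assume e: "e > 0"
      then obtain J E' where J: "fdim I J E'" "measure N1 (sd a E') < e" "measure N2 (sd a E') < e"
        using Compl.IH unfolding approxP_def by blast
      have E'S: "E' \<subseteq> SP I" using J(1) by (simp add: fdim_def)
      have f: "fdim I J (SP I - E')" using J(1) unfolding fdim_def by blast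
      have "sd (SP I - a) (SP I - E') = sd a E'" using aS E'S unfolding sd_def by blast
      thus "\<exists>J E'. fdim I J E' \<and> measure N1 (sd (SP I - a) E') < e \<and> measure N2 (sd (SP I - a) E') < e"
        using f J by metis
    qed
  next
    case (Union A)
    have Asets: "A n \<in> sets (PZ I)" for n using Union.hyps by (simp add: sets_PiM)
    show ?case unfolding approxP_def
    proof (intro allI impI)
      fix e :: real assume e: "e > 0"
      obtain m1 where m1: "\<forall>m\<ge>m1. measure N1 (\<Union>n. A n) - measure N1 (\<Union>n\<in>{..<m}. A n) < e/2"
        using tail_small[OF N1(1), of A "e/2"] e Asets N1(2) by auto
      obtain m2 where m2: "\<forall>m\<ge>m2. measure N2 (\<Union>n. A n) - measure N2 (\<Union>n\<in>{..<m}. A n) < e/2"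
        using tail_small[OF N2(1), of A "e/2"] e Asets N2(2) by auto
      define m where "m = max m1 m2"
      define e' where "e' = e / (2 * (real m + 1))"
      have e': "e' > 0" using e by (simp add: e'_def)
      have "\<forall>n. \<exists>J E'. fdim I J E' \<and> measure N1 (sd (A n) E') < e' \<and> measure N2 (sd (A n) E') < e'"
        using Union.IH e' unfolding approxP_def by blast
      then obtain Jf where "\<forall>n. \<exists>E'. fdim I (Jf n) E' \<and> measure N1 (sd (A n) E') < e' \<and> measure N2 (sd (A n) E') < e'"
        by metis
      then obtain Ef where Ef: "\<And>n. fdim I (Jf n) (Ef n)" "\<And>n. measure N1 (sd (A n) (Ef n)) < e'"
        "\<And>n. measure N2 (sd (A n) (Ef n)) < e'"
        by metis
      define J where "J = (\<Union>n\<in>{..<m}. Jf n)"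
      define E' where "E' = (\<Union>n\<in>{..<m}. Ef n)"
      have fE': "fdim I J E'"
        unfolding fdim_def
      proof (intro conjI ballI impI)
        have ff: "finite (Jf n)" "Jf n \<subseteq> I" "Ef n \<subseteq> SP I" for n using Ef(1)[of n] by (simp_all add: fdim_def)
        show "finite J" using ff unfolding J_def by auto
        show "J \<subseteq> I" using ff unfolding J_def by blast
        show "E' \<subseteq> SP I" using ff unfolding E'_def by blast
        fix x y assume x: "x \<in> SP I" and y: "y \<in> SP I" and xy: "\<forall>j\<in>J. x j = y j"
        have "x \<in> Ef n \<longleftrightarrow> y \<in> Ef n" if "n < m" for n
        proof -
          have "\<forall>j\<in>Jf n. x j = y j" using xy that unfolding J_def by auto
          thus ?thesis using Ef(1)[of n] x y unfolding fdim_def by blast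
        qed
        thus "(x \<in> E') = (y \<in> E')" unfolding E'_def by auto
      qed
      define B where "B = (\<Union>n\<in>{..<m}. A n)"
      have sub: "sd (\<Union>n. A n) E' \<subseteq> ((\<Union>n. A n) - B) \<union> (\<Union>n\<in>{..<m}. sd (A n) (Ef n))"
        unfolding sd_def B_def E'_def by blast
      have Bsub: "B \<subseteq> (\<Union>n. A n)" unfolding B_def by auto
      have Efsets: "Ef n \<in> sets (PZ I)" for n using Ef(1) by (rule fdim_sets)
      have bound: "measure N (sd (\<Union>n. A n) E') < e"
        if N: "finite_measure N" "sets N = sets (PZ I)"
          and t: "measure N (\<Union>n. A n) - measure N B < e/2"
          and s: "\<And>n. measure N (sd (A n) (Ef n)) < e'" for N
      proof -
        interpret N: finite_measure N by fact
        have As: "A n \<in> sets N" for n using Asets N(2) by simp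
        have Es: "Ef n \<in> sets N" for n using Efsets N(2) by simp
        have Us: "(\<Union>n. A n) \<in> sets N" using As by auto
        have Bs: "B \<in> sets N" using As unfolding B_def by auto
        have sds: "sd (A n) (Ef n) \<in> sets N" for n using As Es unfolding sd_def by auto
        have "measure N (sd (\<Union>n. A n) E') \<le> measure N (((\<Union>n. A n) - B) \<union> (\<Union>n\<in>{..<m}. sd (A n) (Ef n)))"
          by (rule N.finite_measure_mono[OF sub]) (use Us Bs sds in auto)
        also have "\<dots> \<le> measure N ((\<Union>n. A n) - B) + measure N (\<Union>n\<in>{..<m}. sd (A n) (Ef n))"
          by (rule measure_Un_le) (use Us Bs sds in auto)
        also have "measure N ((\<Union>n. A n) - B) = measure N (\<Union>n. A n) - measure N B"
          by (rule N.finite_measure_Diff[OF Us Bs Bsub])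
        also have "measure N (\<Union>n\<in>{..<m}. sd (A n) (Ef n)) \<le> (\<Sum>n\<in>{..<m}. measure N (sd (A n) (Ef n)))"
          by (rule N.finite_measure_subadditive_finite) (use sds in auto)
        also have "\<dots> \<le> (\<Sum>n\<in>{..<m}. e')" by (intro sum_mono less_imp_le s)
        also have "\<dots> = real m * e'" by simp
        also have "real m * e' < e / 2"
        proof -
          have "real m * e' = e / 2 * (real m / (real m + 1))" unfolding e'_def by (simp add: field_simps)
          also have "\<dots> < e / 2 * 1" using e by (intro mult_strict_left_mono) auto
          finally show ?thesis by simp
        qed
        finally show ?thesis using t by linarith
      qed
      have "measure N1 (sd (\<Union>n. A n) E') < e"
        by (rule bound[OF N1]) (use m1 Ef(2) in \<open>auto simp: B_def m_def\<close>)
      moreover have "measure N2 (sd (\<Union>n. A n) E') < e"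
        by (rule bound[OF N2]) (use m2 Ef(3) in \<open>auto simp: B_def m_def\<close>)
      ultimately show "\<exists>J E'. fdim I J E' \<and> measure N1 (sd (\<Union>n. A n) E') < e \<and> measure N2 (sd (\<Union>n. A n) E') < e"
        using fE' by blast
    qed
  qed
qed

lemma TVinf:
  assumes gM: "good I M" and gN: "good I N"
    and bd: "\<And>i E. i \<in> I \<Longrightarrow> emeasure (M i) E \<le> emeasure (N i) E + ennreal (\<delta> i)"
    and nn: "\<And>i. i \<in> I \<Longrightarrow> \<delta> i \<ge> 0"
    and D: "\<And>J. finite J \<Longrightarrow> J \<subseteq> I \<Longrightarrow> sum \<delta> J \<le> D"
    and E: "E \<in> sets (PZ I)"
  shows "measure (PiM I M) E \<le> measure (PiM I N) E + D"
proof -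
  interpret PM: prob_space "PiM I M" by (rule good_prob_PiM[OF gM])
  interpret PN: prob_space "PiM I N" by (rule good_prob_PiM[OF gN])
  show ?thesis
  proof (rule field_le_epsilon)
    fix e :: real assume e: "e > 0"
    have ap: "approxP I (PiM I M) (PiM I N) E"
      by (rule approx) (use gM gN E in \<open>auto simp: good_sets_PiM PM.finite_measure_axioms PN.finite_measure_axioms\<close>)
    then obtain J E' where J: "fdim I J E'" "measure (PiM I M) (sd E E') < e/2" "measure (PiM I N) (sd E E') < e/2"
      unfolding approxP_def using e by (meson half_gt_zero)
    have Jf: "finite J" "J \<subseteq> I" using J(1) by (auto simp: fdim_def)
    have E's: "E' \<in> sets (PZ I)" by (rule fdim_sets[OF J(1)])
    define M'' where "M'' = (\<lambda>j. if j \<in> J then M j else N j)"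
    have gM'': "good I M''" using gM gN unfolding good_def M''_def by auto
    have "emeasure (PiM I M) E' = emeasure (PiM I M'') E'"
      by (rule PiM_dep[OF gM gM'' J(1)]) (simp add: M''_def)
    also have "\<dots> \<le> emeasure (PiM I N) E' + ennreal (sum \<delta> J)"
      by (rule TVfin[OF Jf(1) gM'' gN Jf(2)]) (use Jf bd nn E's in \<open>auto simp: M''_def\<close>)
    finally have 1: "measure (PiM I M) E' \<le> measure (PiM I N) E' + sum \<delta> J"
      using nn Jf by (simp add: PM.emeasure_eq_measure PN.emeasure_eq_measure ennreal_plus[symmetric] sum_nonneg subset_iff
          del: ennreal_plus)
    have EsM: "E \<in> sets (PiM I M)" "E' \<in> sets (PiM I M)" using E E's good_sets_PiM[OF gM] by auto
    have EsN: "E \<in> sets (PiM I N)" "E' \<in> sets (PiM I N)" using E E's good_sets_PiM[OF gN] by auto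
    have 2: "measure (PiM I M) E \<le> measure (PiM I M) E' + measure (PiM I M) (sd E E')"
    proof -
      have "measure (PiM I M) E \<le> measure (PiM I M) (E' \<union> sd E E')"
        by (rule PM.finite_measure_mono) (use EsM in \<open>auto simp: sd_def\<close>)
      also have "\<dots> \<le> measure (PiM I M) E' + measure (PiM I M) (sd E E')"
        by (rule measure_Un_le) (use EsM in \<open>auto simp: sd_def\<close>)
      finally show ?thesis .
    qed
    have 3: "measure (PiM I N) E' \<le> measure (PiM I N) E + measure (PiM I N) (sd E E')"
    proof -
      have "measure (PiM I N) E' \<le> measure (PiM I N) (E \<union> sd E E')"
        by (rule PN.finite_measure_mono) (use EsN in \<open>auto simp: sd_def\<close>)
      also have "\<dots> \<le> measure (PiM I N) E + measure (PiM I N) (sd E E')"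
        by (rule measure_Un_le) (use EsN in \<open>auto simp: sd_def\<close>)
      finally show ?thesis .
    qed
    have "sum \<delta> J \<le> D" by (rule D[OF Jf])
    thus "measure (PiM I M) E \<le> measure (PiM I N) E + D + e"
      using 1 2 3 J(2,3) by linarith
  qed
qed

lemma prod_emb_space_cong:
  "(\<And>i. i \<in> I \<Longrightarrow> space (M i) = space (N i)) \<Longrightarrow> prod_emb I M J X = prod_emb I N J X"
  unfolding prod_emb_def by (metis (no_types, lifting) PiE_cong)

lemma measurable_shift_map:
  assumes gM: "good I M"
  shows "(\<lambda>x. restrict (\<lambda>d. g d + x d) I) \<in> measurable (PiM I M) (PZ I)"
proof (rule measurable_restrict)
  fix i assume i: "i \<in> I"
  have 1: "(\<lambda>x. x i) \<in> measurable (PiM I M) (M i)" using i by (rule measurable_component_singleton)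
  have "sets (M i) = sets CZ" using gM by (simp add: good_def)
  hence "measurable (M i) CZ = measurable CZ CZ" by (rule measurable_cong_sets) simp
  hence 2: "(\<lambda>n. g i + n) \<in> measurable (M i) CZ" by simp
  have "(\<lambda>n. g i + n) \<circ> (\<lambda>x. x i) \<in> measurable (PiM I M) CZ" by (rule measurable_comp[OF 1 2])
  thus "(\<lambda>x. g i + x i) \<in> measurable (PiM I M) CZ" unfolding o_def .
qed

lemma distr_shift:
  assumes gM: "good I M"
  shows "distr (PiM I M) (PZ I) (\<lambda>x. restrict (\<lambda>d. g d + x d) I) = PiM I (\<lambda>i. distr (M i) CZ (\<lambda>n. g i + n))"
    (is "?L = ?R")
proof (rule measure_eqI_PiM_infinite)
  show "sets ?L = sets (PZ I)" by simp
  have gR: "good I (\<lambda>i. distr (M i) CZ (\<lambda>n. g i + n))"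
    unfolding good_def
  proof (intro conjI allI ballI)
    fix i show "sets (distr (M i) CZ (\<lambda>n. g i + n)) = sets CZ" by simp
  next
    fix i assume i: "i \<in> I"
    interpret prob_space "M i" by (rule good_prob[OF gM i])
    show "prob_space (distr (M i) CZ (\<lambda>n. g i + n))"
      by (rule prob_space_distr) (use gM in \<open>simp add: good_def measurable_cong_sets[of "M i" CZ CZ CZ]\<close>)
  qed
  show "sets ?R = sets (PZ I)" by (rule good_sets_PiM[OF gR])
  interpret PM: prob_space "PiM I M" by (rule good_prob_PiM[OF gM])
  show "finite_measure ?L"
    by (rule prob_space.finite_measure[OF PM.prob_space_distr[OF measurable_shift_map[OF gM]]])
  fix A J assume J: "finite J" "J \<subseteq> I" and A: "\<And>i. i \<in> J \<Longrightarrow> A i \<in> sets CZ"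
  have pe: "prod_emb I (\<lambda>_. CZ) J (PiE J A) \<in> sets (PZ I)" using J A by (intro sets_PiM_I) auto
  have "(\<lambda>x. restrict (\<lambda>d. g d + x d) I) -` prod_emb I (\<lambda>_. CZ) J (PiE J A) \<inter> space (PiM I M)
      = prod_emb I M J (PiE J (\<lambda>j. {n. g j + n \<in> A j}))"
  proof (intro set_eqI)
    fix x
    have sp: "space (PiM I M) = SP I" by (rule good_space_PiM[OF gM])
    have "x \<in> (\<lambda>x. restrict (\<lambda>d. g d + x d) I) -` prod_emb I (\<lambda>_. CZ) J (PiE J A) \<inter> space (PiM I M)
       \<longleftrightarrow> x \<in> SP I \<and> (\<forall>j\<in>J. g j + x j \<in> A j)"
      unfolding sp using J(2) by (auto simp: prod_emb_iff restrict_PiE_iff Int_absorb1 Int_absorb2)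
    also have "\<dots> \<longleftrightarrow> x \<in> prod_emb I M J (PiE J (\<lambda>j. {n. g j + n \<in> A j}))"
      unfolding prod_emb_iff restrict_PiE_iff using good_space[OF gM] by (auto simp: PiE_iff)
    finally show "x \<in> (\<lambda>x. restrict (\<lambda>d. g d + x d) I) -` prod_emb I (\<lambda>_. CZ) J (PiE J A) \<inter> space (PiM I M)
       \<longleftrightarrow> x \<in> prod_emb I M J (PiE J (\<lambda>j. {n. g j + n \<in> A j}))" .
  qed
  hence "emeasure ?L (prod_emb I (\<lambda>_. CZ) J (PiE J A)) = emeasure (PiM I M) (prod_emb I M J (PiE J (\<lambda>j. {n. g j + n \<in> A j})))"
    by (simp add: emeasure_distr[OF measurable_shift_map[OF gM] pe])
  also have "\<dots> = (\<Prod>j\<in>J. emeasure (M j) {n. g j + n \<in> A j})"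
    using gM J by (intro emeasure_PiM_emb) (auto simp: good_def)
  also have "\<dots> = (\<Prod>j\<in>J. emeasure (distr (M j) CZ (\<lambda>n. g j + n)) (A j))"
  proof (intro prod.cong refl)
    fix j assume "j \<in> J"
    show "emeasure (M j) {n. g j + n \<in> A j} = emeasure (distr (M j) CZ (\<lambda>n. g j + n)) (A j)"
      using gM by (subst emeasure_distr) (auto simp: good_def good_space[OF gM] measurable_cong_sets[of "M j" CZ CZ CZ] vimage_def)
  qed
  also have "\<dots> = emeasure ?R (prod_emb I (\<lambda>i. distr (M i) CZ (\<lambda>n. g i + n)) J (PiE J A))"
    using gR J A by (intro emeasure_PiM_emb[symmetric]) (auto simp: good_def)
  also have "prod_emb I (\<lambda>i. distr (M i) CZ (\<lambda>n. g i + n)) J (PiE J A) = prod_emb I (\<lambda>_. CZ) J (PiE J A)"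
    by (rule prod_emb_space_cong) simp
  finally show "emeasure ?L (prod_emb I (\<lambda>_. CZ) J (PiE J A)) = emeasure ?R (prod_emb I (\<lambda>_. CZ) J (PiE J A))" .
qed

lemma good_cond:
  assumes gM: "good I M"
  shows "good I (\<lambda>i. if i \<in> F then return CZ (v i) else M i)"
  using gM unfolding good_def by (auto intro: prob_space_return)

lemma cond:
  fixes v :: "'i \<Rightarrow> int"
  assumes gM: "good I M" and F: "finite F" "F \<subseteq> I" and E: "E \<in> sets (PZ I)"
  shows "emeasure (PiM I M) (E \<inter> cyl I F v) =
    (\<Prod>f\<in>F. emeasure (M f) {v f}) * emeasure (PiM I (\<lambda>i. if i \<in> F then return CZ (v i) else M i)) E"
proof -
  define MF where "MF = (\<lambda>i. if i \<in> F then return CZ (v i) else M i)"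
  define c where "c = (\<Prod>f\<in>F. emeasure (M f) {v f})"
  have gMF: "good I MF" unfolding MF_def by (rule good_cond[OF gM])
  interpret PM: prob_space "PiM I M" by (rule good_prob_PiM[OF gM])
  define P where "P = density (PiM I M) (indicator (cyl I F v))"
  define Q where "Q = density (PiM I MF) (\<lambda>_. c)"
  have cylM: "cyl I F v \<in> sets (PiM I M)" using cyl_sets[OF F] good_sets_PiM[OF gM] by simp
  have PQ: "P = Q"
  proof (rule measure_eqI_PiM_infinite)
    show "sets P = sets (PZ I)" unfolding P_def using good_sets_PiM[OF gM] by simp
    show "sets Q = sets (PZ I)" unfolding Q_def using good_sets_PiM[OF gMF] by simp
    show "finite_measure P"
    proof
      have "emeasure P (space P) = emeasure (PiM I M) (cyl I F v \<inter> space (PiM I M))"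
        unfolding P_def by (simp add: emeasure_restricted[OF cylM])
      also have "\<dots> \<le> 1" using PM.measure_le_1 by (simp add: PM.emeasure_eq_measure)
      finally show "emeasure P (space P) \<noteq> \<infinity>" by (auto simp: top_unique)
    qed
    fix A J assume J: "finite J" "J \<subseteq> I" and A: "\<And>i. i \<in> J \<Longrightarrow> A i \<in> sets CZ"
    define X where "X = prod_emb I (\<lambda>_. CZ) J (PiE J A)"
    have XM: "X \<in> sets (PiM I M)" unfolding X_def using J A good_sets_PiM[OF gM] by (simp add: sets_PiM_I)
    have XMF: "X \<in> sets (PiM I MF)" unfolding X_def using J A good_sets_PiM[OF gMF] by (simp add: sets_PiM_I)
    define A' where "A' j = (if j \<in> J then A j else UNIV) \<inter> (if j \<in> F then {v j} else UNIV)" for j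
    have JF: "finite (J \<union> F)" "J \<union> F \<subseteq> I" using J F by auto
    have set1: "cyl I F v \<inter> X = prod_emb I M (J \<union> F) (PiE (J \<union> F) A')"
    proof (intro set_eqI)
      fix x
      show "x \<in> cyl I F v \<inter> X \<longleftrightarrow> x \<in> prod_emb I M (J \<union> F) (PiE (J \<union> F) A')"
        using J(2) F(2) good_space[OF gM]
        by (auto simp: cyl_def X_def A'_def prod_emb_iff restrict_PiE_iff PiE_iff Int_absorb1 Int_absorb2)
    qed
    have "emeasure P X = emeasure (PiM I M) (cyl I F v \<inter> X)"
      unfolding P_def by (rule emeasure_restricted[OF cylM XM])
    also have "\<dots> = (\<Prod>j\<in>J \<union> F. emeasure (M j) (A' j))"
      unfolding set1 using gM JF by (intro emeasure_PiM_emb) (auto simp: good_def)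
    also have "\<dots> = (\<Prod>j\<in>J - F. emeasure (M j) (A' j)) * (\<Prod>j\<in>F. emeasure (M j) (A' j))"
    proof -
      have e: "J \<union> F = (J - F) \<union> F" by auto
      have "(\<Prod>j\<in>(J - F) \<union> F. emeasure (M j) (A' j)) = (\<Prod>j\<in>J - F. emeasure (M j) (A' j)) * (\<Prod>j\<in>F. emeasure (M j) (A' j))"
        using J F by (intro prod.union_disjoint) auto
      thus ?thesis unfolding e[symmetric] .
    qed
    also have "(\<Prod>j\<in>J - F. emeasure (M j) (A' j)) = (\<Prod>j\<in>J - F. emeasure (M j) (A j))"
      by (intro prod.cong refl) (auto simp: A'_def)
    also have "(\<Prod>j\<in>F. emeasure (M j) (A' j)) = (\<Prod>j\<in>F. emeasure (M j) {v j} * (if j \<in> J then indicator (A j) (v j) else 1))"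
    proof (intro prod.cong refl)
      fix j assume j: "j \<in> F"
      show "emeasure (M j) (A' j) = emeasure (M j) {v j} * (if j \<in> J then indicator (A j) (v j) else 1)"
        using j by (cases "v j \<in> A j") (auto simp: A'_def)
    qed
    also have "\<dots> = c * (\<Prod>j\<in>F. (if j \<in> J then indicator (A j) (v j) else 1))"
      unfolding c_def by (rule prod.distrib)
    also have "(\<Prod>j\<in>F. (if j \<in> J then indicator (A j) (v j) else 1)) = (\<Prod>j\<in>{j\<in>F. j \<in> J}. indicator (A j) (v j) :: ennreal)"
      using F(1) by (rule prod.inter_filter[symmetric])
    finally have LP: "emeasure P X = (\<Prod>j\<in>J - F. emeasure (M j) (A j)) * (c * (\<Prod>j\<in>{j\<in>F. j \<in> J}. indicator (A j) (v j)))" .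
    have QX: "emeasure Q X = c * emeasure (PiM I MF) X"
      unfolding Q_def by (rule emeasure_density_const[OF XMF])
    have "X = prod_emb I MF J (PiE J A)"
      unfolding X_def by (rule prod_emb_space_cong) (simp add: good_space[OF gMF])
    hence "emeasure (PiM I MF) X = emeasure (PiM I MF) (prod_emb I MF J (PiE J A))" by simp
    also have "\<dots> = (\<Prod>j\<in>J. emeasure (MF j) (A j))" using gMF J A by (intro emeasure_PiM_emb) (auto simp: good_def)
    also have "\<dots> = (\<Prod>j\<in>J - F. emeasure (MF j) (A j)) * (\<Prod>j\<in>{j\<in>F. j \<in> J}. emeasure (MF j) (A j))"
    proof -
      have "J = (J - F) \<union> {j\<in>F. j \<in> J}" by auto
      hence "(\<Prod>j\<in>J. emeasure (MF j) (A j)) = (\<Prod>j\<in>(J - F) \<union> {j\<in>F. j \<in> J}. emeasure (MF j) (A j))" by simp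
      also have "\<dots> = (\<Prod>j\<in>J - F. emeasure (MF j) (A j)) * (\<Prod>j\<in>{j\<in>F. j \<in> J}. emeasure (MF j) (A j))"
        using J F by (intro prod.union_disjoint) auto
      finally show ?thesis .
    qed
    also have "(\<Prod>j\<in>J - F. emeasure (MF j) (A j)) = (\<Prod>j\<in>J - F. emeasure (M j) (A j))"
      by (intro prod.cong refl) (auto simp: MF_def)
    also have "(\<Prod>j\<in>{j\<in>F. j \<in> J}. emeasure (MF j) (A j)) = (\<Prod>j\<in>{j\<in>F. j \<in> J}. indicator (A j) (v j))"
      by (intro prod.cong refl) (auto simp: MF_def)
    finally have LQ0: "emeasure (PiM I MF) X = ((\<Prod>j\<in>J - F. emeasure (M j) (A j)) * (\<Prod>j\<in>{j\<in>F. j \<in> J}. indicator (A j) (v j)))" .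
    show "emeasure P X = emeasure Q X" unfolding LP QX LQ0 by (simp add: ac_simps)
  qed
  have EM: "E \<in> sets (PiM I M)" using E good_sets_PiM[OF gM] by simp
  have EMF: "E \<in> sets (PiM I MF)" using E good_sets_PiM[OF gMF] by simp
  have "emeasure (PiM I M) (E \<inter> cyl I F v) = emeasure P E"
    unfolding P_def by (subst emeasure_restricted[OF cylM EM]) (simp add: Int_commute)
  also have "\<dots> = emeasure Q E" by (simp add: PQ)
  also have "\<dots> = c * emeasure (PiM I MF) E" unfolding Q_def by (rule emeasure_density_const[OF EMF])
  finally show ?thesis unfolding c_def MF_def .
qed

definition wk :: "nat \<Rightarrow> real set \<Rightarrow> (real \<Rightarrow> int) \<Rightarrow> int \<Rightarrow> int" where
  "wk k F v z = (if \<exists>f\<in>F. \<lfloor>f * 2 ^ k\<rfloor> = z then v (SOME f. f \<in> F \<and> \<lfloor>f * 2 ^ k\<rfloor> = z) else 0)"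

definition gk :: "nat \<Rightarrow> real set \<Rightarrow> (real \<Rightarrow> int) \<Rightarrow> real \<Rightarrow> int" where
  "gk k F v d = (if d \<in> Dy then wk k F v \<lfloor>d * 2 ^ k\<rfloor> else undefined)"

lemma floor_dyadic:
  assumes "real j / 2 ^ k \<le> d" "d < real (Suc j) / 2 ^ k"
  shows "\<lfloor>d * 2 ^ k\<rfloor> = int j"
proof -
  have p: "(2::real) ^ k > 0" by simp
  have "real j \<le> d * 2 ^ k" using assms(1) p by (simp add: field_simps)
  moreover have "d * 2 ^ k < real j + 1" using assms(2) p by (simp add: field_simps)
  ultimately show ?thesis by (simp add: floor_eq_iff)
qed

lemma gk_Zfr: "gk k F v \<in> Zfr"
proof -
  define ds where "ds = map (\<lambda>j. real j / 2 ^ k) [0..<2 ^ k + 1]"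
  have len: "length ds = 2 ^ k + 1" by (simp add: ds_def)
  have nth: "j < 2 ^ k + 1 \<Longrightarrow> ds ! j = real j / 2 ^ k" for j by (simp add: ds_def del: upt_Suc)
  have std: "std_dyadic_partition ds"
    unfolding std_dyadic_partition_def
  proof (intro conjI allI impI)
    show "2 \<le> length ds" using len by simp
    show "ds ! 0 = 0" using nth[of 0] by simp
    have "ds \<noteq> []" using len by auto
    hence "last ds = ds ! (2 ^ k)" by (simp add: last_conv_nth len)
    thus "last ds = 1" using nth[of "2 ^ k"] by simp
    fix j assume j: "Suc j < length ds"
    show "ds ! j < ds ! Suc j" using j nth[of j] nth[of "Suc j"] len by (simp add: divide_strict_right_mono)
    show "dyadic_interval (ds ! j) (ds ! Suc j)"
      unfolding dyadic_interval_def using j nth[of j] nth[of "Suc j"] len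
      by (intro exI[of _ j] exI[of _ k]) simp
  qed
  have const: "\<forall>j. Suc j < length ds \<longrightarrow>
         (\<forall>d\<in>Dy. \<forall>d'\<in>Dy. ds ! j \<le> d \<and> d < ds ! Suc j \<and> ds ! j \<le> d' \<and> d' < ds ! Suc j
             \<longrightarrow> gk k F v d = gk k F v d')"
  proof (intro allI impI ballI)
    fix j d d' assume j: "Suc j < length ds" and d: "d \<in> Dy" and d': "d' \<in> Dy"
      and h: "ds ! j \<le> d \<and> d < ds ! Suc j \<and> ds ! j \<le> d' \<and> d' < ds ! Suc j"
    have e1: "ds ! j = real j / 2 ^ k" "ds ! Suc j = real (Suc j) / 2 ^ k" using j len nth by auto
    have "\<lfloor>d * 2 ^ k\<rfloor> = int j" using h e1 by (intro floor_dyadic) auto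
    moreover have "\<lfloor>d' * 2 ^ k\<rfloor> = int j" using h e1 by (intro floor_dyadic) auto
    ultimately show "gk k F v d = gk k F v d'" using d d' by (simp add: gk_def)
  qed
  have "gk k F v \<in> extensional Dy" by (simp add: gk_def extensional_def)
  thus ?thesis unfolding Zfr_def using std const by blast
qed

lemma gk_F:
  assumes "f \<in> F" and dist: "\<And>x y. x \<in> F \<Longrightarrow> y \<in> F \<Longrightarrow> x \<noteq> y \<Longrightarrow> \<lfloor>x * 2 ^ k\<rfloor> \<noteq> \<lfloor>y * 2 ^ k\<rfloor>"
    and "F \<subseteq> Dy"
  shows "gk k F v f = v f"
proof -
  have ex: "\<exists>f'. f' \<in> F \<and> \<lfloor>f' * 2 ^ k\<rfloor> = \<lfloor>f * 2 ^ k\<rfloor>" using assms(1) by blast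
  have "(SOME f'. f' \<in> F \<and> \<lfloor>f' * 2 ^ k\<rfloor> = \<lfloor>f * 2 ^ k\<rfloor>) = f"
  proof (rule some_equality)
    show "f \<in> F \<and> \<lfloor>f * 2 ^ k\<rfloor> = \<lfloor>f * 2 ^ k\<rfloor>" using assms(1) by simp
    fix f' assume "f' \<in> F \<and> \<lfloor>f' * 2 ^ k\<rfloor> = \<lfloor>f * 2 ^ k\<rfloor>"
    thus "f' = f" using dist assms(1) by blast
  qed
  thus ?thesis using assms(1,3) by (auto simp: gk_def wk_def)
qed

lemma gk_nonzero:
  assumes "gk k F v d \<noteq> 0" "d \<in> Dy"
  shows "\<exists>f\<in>F. \<lfloor>f * 2 ^ k\<rfloor> = \<lfloor>d * 2 ^ k\<rfloor>"
  using assms by (auto simp: gk_def wk_def split: if_splits)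

lemma gk_bound:
  assumes "finite F" "d \<in> Dy"
  shows "\<bar>gk k F v d\<bar> \<le> (\<Sum>f\<in>F. \<bar>v f\<bar>)"
proof (cases "gk k F v d = 0")
  case True thus ?thesis by (simp add: sum_nonneg)
next
  case False
  have d: "d \<in> Dy" by fact
  have ex: "\<exists>f\<in>F. \<lfloor>f * 2 ^ k\<rfloor> = \<lfloor>d * 2 ^ k\<rfloor>" using gk_nonzero[OF False d] by auto
  define f where "f = (SOME f. f \<in> F \<and> \<lfloor>f * 2 ^ k\<rfloor> = \<lfloor>d * 2 ^ k\<rfloor>)"
  have f: "f \<in> F" unfolding f_def using someI_ex[of "\<lambda>f. f \<in> F \<and> \<lfloor>f * 2 ^ k\<rfloor> = \<lfloor>d * 2 ^ k\<rfloor>"] ex by blast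
  have "gk k F v d = v f" using ex d by (simp add: gk_def wk_def f_def)
  thus ?thesis using member_le_sum[of f F "\<lambda>f. \<bar>v f\<bar>"] f assms by simp
qed

lemma floor_ne:
  assumes "1 / 2 ^ k \<le> \<bar>x - y\<bar>" shows "\<lfloor>x * 2 ^ k\<rfloor> \<noteq> \<lfloor>(y::real) * 2 ^ k\<rfloor>"
proof
  assume eq: "\<lfloor>x * 2 ^ k\<rfloor> = \<lfloor>y * 2 ^ k\<rfloor>"
  have a1: "real_of_int \<lfloor>x * 2 ^ k\<rfloor> \<le> x * 2 ^ k" by (rule of_int_floor_le)
  have a2: "x * 2 ^ k < real_of_int \<lfloor>x * 2 ^ k\<rfloor> + 1" by (rule real_of_int_floor_add_one_gt)
  have b1: "real_of_int \<lfloor>y * 2 ^ k\<rfloor> \<le> y * 2 ^ k" by (rule of_int_floor_le)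
  have b2: "y * 2 ^ k < real_of_int \<lfloor>y * 2 ^ k\<rfloor> + 1" by (rule real_of_int_floor_add_one_gt)
  have "\<bar>x * 2 ^ k - y * 2 ^ k\<bar> < 1" using a1 a2 b1 b2 eq by (simp only: abs_less_iff) linarith
  moreover have "\<bar>x * 2 ^ k - y * 2 ^ k\<bar> = \<bar>x - y\<bar> * 2 ^ k"
    by (simp add: abs_mult left_diff_distrib[symmetric])
  ultimately have "\<bar>x - y\<bar> * 2 ^ k < 1" by simp
  hence "\<bar>x - y\<bar> < 1 / 2 ^ k" by (simp add: field_simps)
  thus False using assms by simp
qed

lemma exists_k:
  assumes "finite H"
  shows "\<exists>k. \<forall>x\<in>H. \<forall>y\<in>H. x \<noteq> y \<longrightarrow> \<lfloor>x * 2 ^ k\<rfloor> \<noteq> \<lfloor>(y::real) * 2 ^ k\<rfloor>"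
proof -
  define S where "S = insert 1 ((\<lambda>p. \<bar>fst p - snd p\<bar>) ` ((H \<times> H) \<inter> {p. fst p \<noteq> snd p}))"
  have finS: "finite S" unfolding S_def using assms by simp
  have posS: "\<forall>s\<in>S. s > 0" unfolding S_def by auto
  define \<eta> where "\<eta> = Min S"
  have eta: "\<eta> > 0" unfolding \<eta>_def using finS posS by (subst Min_gr_iff) (auto simp: S_def)
  obtain k where k: "(1/2::real) ^ k < \<eta>" using real_arch_pow_inv[OF eta, of "1/2"] by auto
  show ?thesis
  proof (intro exI[of _ k] ballI impI)
    fix x y assume x: "x \<in> H" and y: "y \<in> H" and xy: "x \<noteq> y"
    have "(x, y) \<in> (H \<times> H) \<inter> {p. fst p \<noteq> snd p}" using x y xy by simp
    hence "\<bar>x - y\<bar> \<in> S" unfolding S_def by (metis (no_types, lifting) fst_conv snd_conv image_eqI insertCI)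
    hence "\<eta> \<le> \<bar>x - y\<bar>" unfolding \<eta>_def using finS by simp
    hence "1 / 2 ^ k \<le> \<bar>x - y\<bar>" using k by (simp add: power_one_over)
    thus "\<lfloor>x * 2 ^ k\<rfloor> \<noteq> \<lfloor>y * 2 ^ k\<rfloor>" by (rule floor_ne)
  qed
qed

lemma summable_tail:
  fixes f :: "'a \<Rightarrow> real"
  assumes "f summable_on A" "e > 0"
  shows "\<exists>G. finite G \<and> G \<subseteq> A \<and> (\<forall>J. finite J \<longrightarrow> J \<subseteq> A - G \<longrightarrow> \<bar>sum f J\<bar> \<le> e)"
proof -
  have "(f has_sum infsum f A) A" using assms(1) by (rule has_sum_infsum)
  hence "(sum f \<longlongrightarrow> infsum f A) (finite_subsets_at_top A)" unfolding has_sum_def .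
  hence "eventually (\<lambda>X. dist (sum f X) (infsum f A) < e/2) (finite_subsets_at_top A)"
    using assms(2) by (intro tendstoD) auto
  hence "\<exists>X. finite X \<and> X \<subseteq> A \<and> (\<forall>Y. finite Y \<and> X \<subseteq> Y \<and> Y \<subseteq> A \<longrightarrow> dist (sum f Y) (infsum f A) < e/2)"
    by (simp only: eventually_finite_subsets_at_top)
  then obtain G where G: "finite G" "G \<subseteq> A"
    and P0: "\<forall>Y. finite Y \<and> G \<subseteq> Y \<and> Y \<subseteq> A \<longrightarrow> dist (sum f Y) (infsum f A) < e/2"
    by (elim exE conjE)
  have P: "\<And>Y. finite Y \<Longrightarrow> G \<subseteq> Y \<Longrightarrow> Y \<subseteq> A \<Longrightarrow> dist (sum f Y) (infsum f A) < e/2"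
    using P0 by blast
  show ?thesis
  proof (intro exI[of _ G] conjI G allI impI)
    fix J assume J: "finite J" "J \<subseteq> A - G"
    have 1: "dist (sum f (G \<union> J)) (infsum f A) < e/2" using J G by (intro P) auto
    have 2: "dist (sum f G) (infsum f A) < e/2" using G by (intro P) auto
    have eq: "sum f (G \<union> J) = sum f G + sum f J" using J G by (intro sum.union_disjoint) auto
    have a: "\<bar>(sum f G + sum f J) - infsum f A\<bar> < e/2" using 1 unfolding eq dist_real_def .
    have b: "\<bar>sum f G - infsum f A\<bar> < e/2" using 2 unfolding dist_real_def .
    show "\<bar>sum f J\<bar> \<le> e" using a b by (simp only: abs_less_iff abs_le_iff) linarith
  qed
qed

definition MB :: "(real \<Rightarrow> real) \<Rightarrow> real \<Rightarrow> int measure" where "MB \<beta> d = mb (\<beta> d)"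

definition MFv :: "(real \<Rightarrow> real) \<Rightarrow> real set \<Rightarrow> (real \<Rightarrow> int) \<Rightarrow> real \<Rightarrow> int measure" where
  "MFv \<beta> F v = (\<lambda>i. if i \<in> F then return CZ (v i) else MB \<beta> i)"

lemma good_MB: "\<forall>d\<in>Dy. \<beta> d > 0 \<Longrightarrow> good Dy (MB \<beta>)"
  unfolding good_def MB_def by (auto intro: prob_mb)

lemma pm0: "pm b 0 = 1 / Zb b" by (simp add: pm_def gw_def)

lemma key:
  fixes \<beta> :: "real \<Rightarrow> real" and p :: real
  assumes pos: "\<forall>d\<in>Dy. \<beta> d > 0"
    and p: "0 < p" "p < 1/2"
    and sm: "(\<lambda>d. \<beta> d powr p) summable_on Dy"
    and A: "A \<in> sets (PZ Dy)"
    and inv: "\<forall>g\<in>Zfr. \<forall>x\<in>SP Dy. act g x \<in> A \<longleftrightarrow> x \<in> A"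
    and F: "finite F" "F \<subseteq> Dy"
  shows "measure (PiM Dy (MFv \<beta> F v)) A = measure (PiM Dy (MFv \<beta> F (\<lambda>_. 0))) A"
proof -
  define K where "K = (\<Sum>f\<in>F. real_of_int \<bar>v f\<bar>)"
  have K0: "K \<ge> 0" unfolding K_def by (simp add: sum_nonneg)
  have gMB: "good Dy (MB \<beta>)" by (rule good_MB[OF pos])
  have gv: "good Dy (MFv \<beta> F v)" unfolding MFv_def by (rule good_cond[OF gMB])
  have g0: "good Dy (MFv \<beta> F (\<lambda>_. 0))" unfolding MFv_def by (rule good_cond[OF gMB])
  have main: "\<bar>measure (PiM Dy (MFv \<beta> F v)) A - measure (PiM Dy (MFv \<beta> F (\<lambda>_. 0))) A\<bar> \<le> 2 * K * e"
    if e: "e > 0" for e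
  proof -
    obtain G where G: "finite G" "G \<subseteq> Dy"
      and Gs: "\<And>J. finite J \<Longrightarrow> J \<subseteq> Dy - G \<Longrightarrow> \<bar>sum (\<lambda>d. \<beta> d powr p) J\<bar> \<le> e"
      using summable_tail[OF sm e] by blast
    obtain k where k: "\<forall>x\<in>F \<union> G. \<forall>y\<in>F \<union> G. x \<noteq> y \<longrightarrow> \<lfloor>x * 2 ^ k\<rfloor> \<noteq> \<lfloor>y * 2 ^ k\<rfloor>"
      using exists_k[of "F \<union> G"] F G by auto
    define g where "g = gk k F v"
    have gZ: "g \<in> Zfr" unfolding g_def by (rule gk_Zfr)
    have gF: "g f = v f" if "f \<in> F" for f
      unfolding g_def using that F(2) k by (intro gk_F) auto
    have gG: "d \<notin> G" if dD: "d \<in> Dy" and dF: "d \<notin> F" and gd: "g d \<noteq> 0" for d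
    proof
      assume dG: "d \<in> G"
      have "gk k F v d \<noteq> 0" using gd by (simp add: g_def)
      then obtain f where f: "f \<in> F" "\<lfloor>f * 2 ^ k\<rfloor> = \<lfloor>d * 2 ^ k\<rfloor>"
        using gk_nonzero[of k F v d] dD by blast
      have "f \<noteq> d" using f dF by auto
      thus False using k f dG by auto
    qed
    have gK: "real_of_int \<bar>g d\<bar> \<le> K" if "d \<in> Dy" for d
    proof -
      have h: "\<bar>gk k F v d\<bar> \<le> (\<Sum>f\<in>F. \<bar>v f\<bar>)" by (rule gk_bound[OF F(1) that])
      hence "real_of_int \<bar>gk k F v d\<bar> \<le> real_of_int (\<Sum>f\<in>F. \<bar>v f\<bar>)" by (simp only: of_int_le_iff)
      thus ?thesis unfolding g_def K_def by (simp only: of_int_sum)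
    qed
    define N' where "N' = (\<lambda>i. if i \<in> F then return CZ (v i) else distr (MB \<beta> i) CZ (\<lambda>n. g i + n))"
    have gN': "good Dy N'" unfolding good_def N'_def
    proof (intro conjI allI ballI)
      fix i show "sets (if i \<in> F then return CZ (v i) else distr (MB \<beta> i) CZ (\<lambda>n. g i + n)) = sets CZ" by simp
    next
      fix i assume i: "i \<in> Dy"
      show "prob_space (if i \<in> F then return CZ (v i) else distr (MB \<beta> i) CZ (\<lambda>n. g i + n))"
      proof (cases "i \<in> F")
        case True thus ?thesis by (simp add: prob_space_return)
      next
        case False
        interpret prob_space "MB \<beta> i" using gMB i by (rule good_prob)
        have m: "(\<lambda>n. g i + n) \<in> measurable (MB \<beta> i) CZ" unfolding MB_def by (rule measurable_from_mb)
        show ?thesis using False prob_space_distr[OF m] by simp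
      qed
    qed
    have dist_eq: "distr (PiM Dy (MFv \<beta> F (\<lambda>_. 0))) (PZ Dy) (act g) = PiM Dy N'"
    proof -
      have "act g = (\<lambda>x. restrict (\<lambda>d. g d + x d) Dy)" by (simp add: act_def[abs_def])
      hence "distr (PiM Dy (MFv \<beta> F (\<lambda>_. 0))) (PZ Dy) (act g) =
          PiM Dy (\<lambda>i. distr (MFv \<beta> F (\<lambda>_. 0) i) CZ (\<lambda>n. g i + n))"
        using distr_shift[OF g0, of g] by simp
      also have "\<dots> = PiM Dy N'"
      proof (rule PiM_cong[OF refl])
        fix i assume i: "i \<in> Dy"
        show "distr (MFv \<beta> F (\<lambda>_. 0) i) CZ (\<lambda>n. g i + n) = N' i"
        proof (cases "i \<in> F")
          case True
          have "distr (return CZ 0) CZ (\<lambda>n. g i + n) = return CZ (g i + 0)"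
            by (rule distr_return) auto
          thus ?thesis using True gF[OF True] by (simp add: MFv_def N'_def)
        qed (simp add: MFv_def N'_def)
      qed
      finally show ?thesis .
    qed
    have sp0: "space (PiM Dy (MFv \<beta> F (\<lambda>_. 0))) = SP Dy" by (rule good_space_PiM[OF g0])
    have AS: "A \<subseteq> SP Dy" using sets.sets_into_space[OF A] by (simp add: space_PiM)
    have pre: "act g -` A \<inter> space (PiM Dy (MFv \<beta> F (\<lambda>_. 0))) = A"
      unfolding sp0
    proof (intro set_eqI)
      fix x
      show "x \<in> act g -` A \<inter> SP Dy \<longleftrightarrow> x \<in> A"
      proof (cases "x \<in> SP Dy")
        case True
        have "act g x \<in> A \<longleftrightarrow> x \<in> A" using bspec[OF bspec[OF inv gZ] True] .
        thus ?thesis using True by simp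
      next
        case False thus ?thesis using AS by auto
      qed
    qed
    have actg: "act g = (\<lambda>x. restrict (\<lambda>d. g d + x d) Dy)" by (simp add: act_def[abs_def])
    have mact: "act g \<in> measurable (PiM Dy (MFv \<beta> F (\<lambda>_. 0))) (PZ Dy)"
      unfolding actg by (rule measurable_shift_map[OF g0])
    have "emeasure (PiM Dy N') A = emeasure (distr (PiM Dy (MFv \<beta> F (\<lambda>_. 0))) (PZ Dy) (act g)) A"
      by (simp only: dist_eq)
    also have "\<dots> = emeasure (PiM Dy (MFv \<beta> F (\<lambda>_. 0))) (act g -` A \<inter> space (PiM Dy (MFv \<beta> F (\<lambda>_. 0))))"
      by (rule emeasure_distr[OF mact A])
    also have "\<dots> = emeasure (PiM Dy (MFv \<beta> F (\<lambda>_. 0))) A" by (simp only: pre)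
    finally have eq0: "emeasure (PiM Dy N') A = emeasure (PiM Dy (MFv \<beta> F (\<lambda>_. 0))) A" .
    interpret P0: prob_space "PiM Dy (MFv \<beta> F (\<lambda>_. 0))" by (rule good_prob_PiM[OF g0])
    interpret PN: prob_space "PiM Dy N'" by (rule good_prob_PiM[OF gN'])
    have meq0: "measure (PiM Dy N') A = measure (PiM Dy (MFv \<beta> F (\<lambda>_. 0))) A"
      using eq0 by (simp add: P0.emeasure_eq_measure PN.emeasure_eq_measure)
    define \<delta> where "\<delta> i = (if i \<in> F then 0 else real_of_int \<bar>g i\<bar> * pm (\<beta> i) 0)" for i
    have \<delta>0: "\<delta> i \<ge> 0" if "i \<in> Dy" for i
      using pm_pos[of "\<beta> i" 0] pos that unfolding \<delta>_def by (auto intro!: mult_nonneg_nonneg less_imp_le)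
    have bd1: "emeasure (MFv \<beta> F v i) E \<le> emeasure (N' i) E + ennreal (\<delta> i)" if "i \<in> Dy" for i E
    proof (cases "i \<in> F")
      case True thus ?thesis by (simp add: MFv_def N'_def \<delta>_def)
    next
      case False thus ?thesis using shift_le1[of "\<beta> i" E "g i"] pos that by (simp add: MFv_def N'_def \<delta>_def MB_def)
    qed
    have bd2: "emeasure (N' i) E \<le> emeasure (MFv \<beta> F v i) E + ennreal (\<delta> i)" if "i \<in> Dy" for i E
    proof (cases "i \<in> F")
      case True thus ?thesis by (simp add: MFv_def N'_def \<delta>_def)
    next
      case False thus ?thesis using shift_le2[of "\<beta> i" "g i" E] pos that by (simp add: MFv_def N'_def \<delta>_def MB_def)
    qed
    have D: "sum \<delta> J \<le> 2 * K * e" if J: "finite J" "J \<subseteq> Dy" for J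
    proof -
      define J' where "J' = {i\<in>J. i \<notin> F \<and> g i \<noteq> 0}"
      have J'sub: "J' \<subseteq> J" unfolding J'_def by auto
      have "sum \<delta> J = sum \<delta> J'"
        by (rule sum.mono_neutral_right[OF J(1) J'sub]) (auto simp: J'_def \<delta>_def)
      also have "\<dots> \<le> (\<Sum>i\<in>J'. K * (2 * \<beta> i powr p))"
      proof (rule sum_mono)
        fix i assume i: "i \<in> J'"
        hence iD: "i \<in> Dy" "i \<notin> F" using J unfolding J'_def by auto
        have "pm (\<beta> i) 0 \<le> 2 * \<beta> i powr p" unfolding pm0 using inv_Zb_le[of "\<beta> i" p] pos iD p by auto
        moreover have "pm (\<beta> i) 0 \<ge> 0" using pm_pos[of "\<beta> i" 0] pos iD by auto
        ultimately show "\<delta> i \<le> K * (2 * \<beta> i powr p)"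
          unfolding \<delta>_def using iD gK[OF iD(1)] by (simp add: mult_mono)
      qed
      also have "\<dots> = 2 * K * (\<Sum>i\<in>J'. \<beta> i powr p)" by (simp add: sum_distrib_left ac_simps)
      also have "(\<Sum>i\<in>J'. \<beta> i powr p) \<le> e"
      proof -
        have "J' \<subseteq> Dy - G" using gG J unfolding J'_def by auto
        hence "\<bar>sum (\<lambda>d. \<beta> d powr p) J'\<bar> \<le> e" using J J'sub by (intro Gs) (auto intro: finite_subset)
        thus ?thesis by simp
      qed
      hence "2 * K * (\<Sum>i\<in>J'. \<beta> i powr p) \<le> 2 * K * e" using K0 by (intro mult_left_mono) auto
      finally show ?thesis .
    qed
    have t1: "measure (PiM Dy (MFv \<beta> F v)) A \<le> measure (PiM Dy N') A + 2 * K * e"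
      by (rule TVinf[OF gv gN' bd1 \<delta>0 D A])
    have t2: "measure (PiM Dy N') A \<le> measure (PiM Dy (MFv \<beta> F v)) A + 2 * K * e"
      by (rule TVinf[OF gN' gv bd2 \<delta>0 D A])
    show ?thesis using t1 t2 meq0 by linarith
  qed
  show ?thesis
  proof (rule ccontr)
    assume ne: "measure (PiM Dy (MFv \<beta> F v)) A \<noteq> measure (PiM Dy (MFv \<beta> F (\<lambda>_. 0))) A"
    define d where "d = \<bar>measure (PiM Dy (MFv \<beta> F v)) A - measure (PiM Dy (MFv \<beta> F (\<lambda>_. 0))) A\<bar>"
    have d: "d > 0" using ne unfolding d_def by simp
    define e where "e = d / (4 * (K + 1))"
    have e: "e > 0" using d K0 unfolding e_def by simp
    have "d \<le> 2 * K * e" using main[OF e] unfolding d_def .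
    also have "2 * K * e < d"
    proof -
      have "2 * K * e = (2 * K * d) / (4 * (K + 1))" unfolding e_def by simp
      also have "2 * K * d < (4 * (K + 1)) * d" using d K0 by (intro mult_strict_right_mono) auto
      hence "(2 * K * d) / (4 * (K + 1)) < d" using K0 by (simp add: divide_less_eq mult.commute)
      finally show ?thesis .
    qed
    finally show False by simp
  qed
qed

lemma fdim_SP: "finite J \<Longrightarrow> J \<subseteq> I \<Longrightarrow> fdim I J (SP I)"
  unfolding fdim_def by auto

theorem corollary3p14:
  fixes \<beta> :: "real \<Rightarrow> real" and p :: real
  assumes "\<forall>d\<in>Dy. \<beta> d > 0"
    and "0 < p" and "p < 1/2"
    and "(\<lambda>d. \<beta> d powr p) summable_on Dy"
  shows "ergodic_action (mbetaD \<beta>)"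
  unfolding ergodic_action_def
proof (intro ballI impI)
  fix A assume A0: "A \<in> sets (mbetaD \<beta>)"
    and inv0: "\<forall>g\<in>Zfr. \<forall>x\<in>space (mbetaD \<beta>). (act g x \<in> A) = (x \<in> A)"
  define \<mu> where "\<mu> = PiM Dy (MB \<beta>)"
  have mu: "mbetaD \<beta> = \<mu>" unfolding \<mu>_def mbetaD_def MB_def[abs_def] by simp
  have gMB: "good Dy (MB \<beta>)" by (rule good_MB[OF assms(1)])
  have sets_mu: "sets \<mu> = sets (PZ Dy)" unfolding \<mu>_def by (rule good_sets_PiM[OF gMB])
  have space_mu: "space \<mu> = SP Dy" unfolding \<mu>_def by (rule good_space_PiM[OF gMB])
  interpret P: prob_space \<mu> unfolding \<mu>_def by (rule good_prob_PiM[OF gMB])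
  have A: "A \<in> sets (PZ Dy)" using A0 mu sets_mu by simp
  have Amu: "A \<in> sets \<mu>" using A0 mu by simp
  have inv: "\<forall>g\<in>Zfr. \<forall>x\<in>SP Dy. act g x \<in> A \<longleftrightarrow> x \<in> A" using inv0 mu space_mu by simp
  \<comment> \<open>independence from cylinders\<close>
  have fact1: "emeasure \<mu> (A \<inter> cyl Dy J w) = emeasure \<mu> (cyl Dy J w) * emeasure (PiM Dy (MFv \<beta> J (\<lambda>_. 0))) A"
    if J: "finite J" "J \<subseteq> Dy" for J w
  proof -
    have gv: "good Dy (MFv \<beta> J w)" unfolding MFv_def by (rule good_cond[OF gMB])
    have g0: "good Dy (MFv \<beta> J (\<lambda>_. 0))" unfolding MFv_def by (rule good_cond[OF gMB])
    interpret Pv: prob_space "PiM Dy (MFv \<beta> J w)" by (rule good_prob_PiM[OF gv])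
    interpret P0: prob_space "PiM Dy (MFv \<beta> J (\<lambda>_. 0))" by (rule good_prob_PiM[OF g0])
    have k: "measure (PiM Dy (MFv \<beta> J w)) A = measure (PiM Dy (MFv \<beta> J (\<lambda>_. 0))) A"
      by (rule key[OF assms(1-4) A inv J])
    have ke: "emeasure (PiM Dy (MFv \<beta> J w)) A = emeasure (PiM Dy (MFv \<beta> J (\<lambda>_. 0))) A"
      using k by (simp add: Pv.emeasure_eq_measure P0.emeasure_eq_measure)
    have "emeasure \<mu> (A \<inter> cyl Dy J w) = (\<Prod>j\<in>J. emeasure (MB \<beta> j) {w j}) * emeasure (PiM Dy (MFv \<beta> J w)) A"
      unfolding \<mu>_def MFv_def by (rule cond[OF gMB J A])
    also have "(\<Prod>j\<in>J. emeasure (MB \<beta> j) {w j}) = emeasure \<mu> (cyl Dy J w)"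
      unfolding \<mu>_def by (rule emeasure_cyl[OF gMB J, symmetric])
    finally show ?thesis using ke by simp
  qed
  define N where "N = density \<mu> (indicator A)"
  have sets_N: "sets N = sets (PZ Dy)" unfolding N_def sets_density by (rule sets_mu)
  have emN: "emeasure N X = emeasure \<mu> (A \<inter> X)" if X: "X \<in> sets (PZ Dy)" for X
  proof -
    have Xmu: "X \<in> sets \<mu>" unfolding sets_mu by (rule X)
    show ?thesis unfolding N_def by (rule emeasure_restricted[OF Amu Xmu])
  qed
  have fdimN: "emeasure N X = emeasure \<mu> X * emeasure \<mu> A" if X: "fdim Dy J X" for J X
  proof -
    have J: "finite J" "J \<subseteq> Dy" using X by (auto simp: fdim_def)
    define R where "R = (\<lambda>x. restrict x J) ` X"
    define c where "c = emeasure (PiM Dy (MFv \<beta> J (\<lambda>_. 0))) A"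
    have gen: "emeasure N Y = emeasure \<mu> Y * c" if Y: "fdim Dy J Y" for Y
    proof -
      define R' where "R' = (\<lambda>x. restrict x J) ` Y"
      have "emeasure N Y = (\<integral>\<^sup>+ w. emeasure N (cyl Dy J w) \<partial>count_space R')"
        unfolding R'_def by (rule sum_cyl[OF Y sets_N])
      also have "\<dots> = (\<integral>\<^sup>+ w. emeasure \<mu> (cyl Dy J w) * c \<partial>count_space R')"
        by (intro nn_integral_cong) (simp add: emN cyl_sets[OF J] fact1[OF J] c_def)
      also have "\<dots> = (\<integral>\<^sup>+ w. emeasure \<mu> (cyl Dy J w) \<partial>count_space R') * c"
        by (rule nn_integral_multc) simp
      also have "(\<integral>\<^sup>+ w. emeasure \<mu> (cyl Dy J w) \<partial>count_space R') = emeasure \<mu> Y"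
        unfolding R'_def by (rule sum_cyl[OF Y sets_mu, symmetric])
      finally show ?thesis .
    qed
    have "emeasure N (SP Dy) = emeasure \<mu> (SP Dy) * c" by (rule gen[OF fdim_SP[OF J]])
    moreover have "emeasure N (SP Dy) = emeasure \<mu> A"
    proof -
      have "SP Dy \<in> sets (PZ Dy)" using sets.top[of "PZ Dy"] by (simp add: space_PiM)
      hence "emeasure N (SP Dy) = emeasure \<mu> (A \<inter> SP Dy)" by (rule emN)
      also have "A \<inter> SP Dy = A" using sets.sets_into_space[OF Amu] space_mu by auto
      finally show ?thesis .
    qed
    moreover have "emeasure \<mu> (SP Dy) = 1" using P.emeasure_space_1 space_mu by simp
    ultimately have "c = emeasure \<mu> A" by simp
    thus ?thesis using gen[OF X] by simp
  qed
  have NQ: "N = density \<mu> (\<lambda>_. emeasure \<mu> A)"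
  proof (rule measure_eqI_PiM_infinite)
    show "sets N = sets (PZ Dy)" by (rule sets_N)
    show "sets (density \<mu> (\<lambda>_. emeasure \<mu> A)) = sets (PZ Dy)" using sets_mu by simp
    show "finite_measure N"
    proof
      have "emeasure N (space N) = emeasure \<mu> (A \<inter> space N)"
        using sets.top[of N] sets_N by (intro emN) simp
      also have "\<dots> \<le> 1" using P.measure_le_1 by (simp add: P.emeasure_eq_measure)
      finally show "emeasure N (space N) \<noteq> \<infinity>" by (auto simp: top_unique)
    qed
    fix B J assume J: "finite J" "J \<subseteq> Dy" and B: "\<And>i. i \<in> J \<Longrightarrow> B i \<in> sets CZ"
    have X: "fdim Dy J (prod_emb Dy (\<lambda>_. CZ) J (PiE J B))" by (rule fdim_prod_emb[OF J])
    have Xs: "prod_emb Dy (\<lambda>_. CZ) J (PiE J B) \<in> sets \<mu>" using fdim_sets[OF X] sets_mu by simp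
    show "emeasure N (prod_emb Dy (\<lambda>_. CZ) J (PiE J B)) = emeasure (density \<mu> (\<lambda>_. emeasure \<mu> A)) (prod_emb Dy (\<lambda>_. CZ) J (PiE J B))"
      unfolding fdimN[OF X] emeasure_density_const[OF Xs] by (simp add: mult.commute)
  qed
  have "emeasure \<mu> A = emeasure N A" using emN[OF A] by simp
  also have "\<dots> = emeasure \<mu> A * emeasure \<mu> A" unfolding NQ emeasure_density_const[OF Amu] ..
  finally have ee: "ennreal (P.prob A) = ennreal (P.prob A) * ennreal (P.prob A)"
    by (simp only: P.emeasure_eq_measure)
  define m where "m = P.prob A"
  have m0: "m \<ge> 0" unfolding m_def by simp
  have "ennreal m = ennreal (m * m)" using ee m0 unfolding m_def by (simp only: ennreal_mult)
  hence h: "m = m * m" using m0 by (subst (asm) ennreal_inj) auto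
  have "m * (1 - m) = m - m * m" by (simp add: right_diff_distrib)
  also have "\<dots> = 0" using h by linarith
  finally have "m * (1 - m) = 0" .
  hence "P.prob A = 0 \<or> P.prob A = 1" unfolding m_def by simp
  thus "emeasure (mbetaD \<beta>) A = 0 \<or> emeasure (mbetaD \<beta>) (space (mbetaD \<beta>) - A) = 0"
  proof
    assume "P.prob A = 0"
    thus ?thesis unfolding mu by (simp add: P.emeasure_eq_measure)
  next
    assume "P.prob A = 1"
    hence "P.prob (space \<mu> - A) = 0" using P.prob_compl[OF Amu] by simp
    thus ?thesis unfolding mu by (simp add: P.emeasure_eq_measure)
  qed
qed

end
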